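(* For each $t=0,\ldots,T$ and each node $\mu\in\Omega_t$, the set $\mathcal{Z}^{\mathrm{bd}\mu}_t$ from the construction in the context is a polyhedral convex set whose recession cone is $\mathcal{Q}^\mu_t$.
   Context: Finite filtered probability space $(\Omega,\mathcal{F},\mathbb{P};(\mathcal{F}_t)_{t=0}^T)$, $\mathcal{F}_0$ trivial, $\mathcal{F}_T=2^\Omega$, $\mathbb{P}(\{\omega\})>0$. $\Omega_t$: atoms (nodes) of $\mathcal{F}_t$; $\mathrm{succ}\,\mu=\{\nu\in\Omega_{t+1}:\nu\subseteq\mu\}$. $\mathcal{L}_t$: $\mathcal{F}_t$-measurable $\mathbb{R}^d$-valued random variables. $d$ assets, $\mathcal{F}_t$-measurable exchange rates $\pi^{jk}_t>0$, $\pi^{jj}_t=1$. $\mathcal{K}^\mu_t$: convex cone generated by $e^1,\ldots,e^d$ and $\pi^{jk}_t(\mu)e^j-e^k$; $\mathcal{K}_t=\{x\in\mathcal{L}_t:x(\mu)\in\mathcal{K}^\mu_t\ \forall\mu\}$. Deferred solvency cone $\mathcal{Q}_t$: $z\in\mathcal{L}_t$ for which there exist $y_{t+1},\ldots,y_{T+1}$, $y_s\in\mathcal{L}_{s-1}$, $y_{T+1}=0$, with $z-y_{t+1}\in\mathcal{K}_t$, $y_s-y_{s+1}\in\mathcal{K}_s$ ($s=t+1,\ldots,T$); $\mathcal{Q}^\mu_t=\{z(\mu):z\in\mathcal{Q}_t\}$. American option: adapted $\mathbb{R}^d$-valued $\xi=(\xi_t)_{t=0}^T$. The recession cone of a nonempty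 convex $A\subseteq\mathbb{R}^d$ is $\{y: A+\lambda y\subseteq A\ \forall\lambda\ge0\}$. Construction (nodewise): $\mathcal{U}^{\mathrm{bd}\mu}_t=-\xi_t(\mu)+\mathcal{Q}^\mu_t$ for all $t,\mu$; for $\mu\in\Omega_T$, $\mathcal{Z}^{\mathrm{bd}\mu}_T=\mathcal{V}^{\mathrm{bd}\mu}_T=\mathcal{W}^{\mathrm{bd}\mu}_T=\mathcal{U}^{\mathrm{bd}\mu}_T$; backwards for $t<T$, $\mu\in\Omega_t$: $\mathcal{W}^{\mathrm{bd}\mu}_t=\bigcap_{\nu\in\mathrm{succ}\,\mu}\mathcal{Z}^{\mathrm{bd}\nu}_{t+1}$, $\mathcal{V}^{\mathrm{bd}\mu}_t=\mathcal{W}^{\mathrm{bd}\mu}_t+\mathcal{Q}^\mu_t$, $\mathcal{Z}^{\mathrm{bd}\mu}_t=\mathrm{conv}\{\mathcal{U}^{\mathrm{bd}\mu}_t,\mathcal{V}^{\mathrm{bd}\mu}_t\}$ (the smallest convex set containing both). Standing assumption: no arbitrage (no predictable $y$ with $y_0=0$, $y_{T+1}=0$, $y_t-y_{t+1}\in\mathcal{K}_t$ for $t<T$ and $y_T-x\in\mathcal{K}_T$ for a nonzero componentwise non-negative $x\in\mathcal{L}_T$). *)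

theory Defs
  imports "HOL-Analysis.Analysis"
begin

text \<open>Finite filtration given by the sequence of partitions A t (the atoms / nodes Omega_t).\<close>

definition is_partition :: "'w set \<Rightarrow> 'w set set \<Rightarrow> bool" where
  "is_partition \<Omega> P \<longleftrightarrow> (\<forall>\<mu>\<in>P. \<mu> \<noteq> {} \<and> \<mu> \<subseteq> \<Omega>) \<and> \<Union>P = \<Omega> \<and>
     (\<forall>\<mu>\<in>P. \<forall>\<nu>\<in>P. \<mu> \<noteq> \<nu> \<longrightarrow> \<mu> \<inter> \<nu> = {})"

definition finite_filtration :: "'w set \<Rightarrow> (nat \<Rightarrow> 'w set set) \<Rightarrow> nat \<Rightarrow> bool" where
  "finite_filtration \<Omega> A T \<longleftrightarrow> finite \<Omega> \<and> \<Omega> \<noteq> {} \<and>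
     (\<forall>t\<le>T. is_partition \<Omega> (A t)) \<and>
     (\<forall>t<T. \<forall>\<nu>\<in>A (Suc t). \<exists>\<mu>\<in>A t. \<nu> \<subseteq> \<mu>) \<and>
     A 0 = {\<Omega>} \<and> A T = (\<lambda>\<omega>. {\<omega>}) ` \<Omega>"

definition meas :: "(nat \<Rightarrow> 'w set set) \<Rightarrow> nat \<Rightarrow> ('w \<Rightarrow> 'b) \<Rightarrow> bool" where
  "meas A t x \<longleftrightarrow> (\<forall>\<mu>\<in>A t. \<forall>\<omega>\<in>\<mu>. \<forall>\<omega>'\<in>\<mu>. x \<omega> = x \<omega>')"

definition nodeval :: "('w \<Rightarrow> 'b) \<Rightarrow> 'w set \<Rightarrow> 'b" where
  "nodeval x \<mu> = x (SOME \<omega>. \<omega> \<in> \<mu>)"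

definition succ :: "(nat \<Rightarrow> 'w set set) \<Rightarrow> nat \<Rightarrow> 'w set \<Rightarrow> 'w set set" where
  "succ A t \<mu> = {\<nu> \<in> A (Suc t). \<nu> \<subseteq> \<mu>}"

definition Kcone :: "(nat \<Rightarrow> 'w \<Rightarrow> 'd::finite \<Rightarrow> 'd \<Rightarrow> real) \<Rightarrow> nat \<Rightarrow> 'w \<Rightarrow> (real^'d) set" where
  "Kcone \<pi> t \<omega> = convex_cone hull
     ({axis j 1 | j. True} \<union> {\<pi> t \<omega> j k *\<^sub>R axis j 1 - axis k 1 | j k. True})"

definition Kset :: "'w set \<Rightarrow> (nat \<Rightarrow> 'w set set) \<Rightarrow> (nat \<Rightarrow> 'w \<Rightarrow> 'd::finite \<Rightarrow> 'd \<Rightarrow> real) \<Rightarrow> nat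
    \<Rightarrow> ('w \<Rightarrow> real^'d) set" where
  "Kset \<Omega> A \<pi> t = {x. meas A t x \<and> (\<forall>\<omega>\<in>\<Omega>. x \<omega> \<in> Kcone \<pi> t \<omega>)}"

definition Qset :: "'w set \<Rightarrow> (nat \<Rightarrow> 'w set set) \<Rightarrow> (nat \<Rightarrow> 'w \<Rightarrow> 'd::finite \<Rightarrow> 'd \<Rightarrow> real) \<Rightarrow> nat \<Rightarrow> nat
    \<Rightarrow> ('w \<Rightarrow> real^'d) set" where
  "Qset \<Omega> A \<pi> T t = {z. meas A t z \<and>
     (\<exists>y :: nat \<Rightarrow> 'w \<Rightarrow> real^'d.
        (\<forall>s\<in>{Suc t..Suc T}. meas A (s - 1) (y s)) \<and>
        (\<forall>\<omega>\<in>\<Omega>. y (Suc T) \<omega> = 0) \<and>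
        (\<lambda>\<omega>. z \<omega> - y (Suc t) \<omega>) \<in> Kset \<Omega> A \<pi> t \<and>
        (\<forall>s\<in>{Suc t..T}. (\<lambda>\<omega>. y s \<omega> - y (Suc s) \<omega>) \<in> Kset \<Omega> A \<pi> s))}"

definition Qnode :: "'w set \<Rightarrow> (nat \<Rightarrow> 'w set set) \<Rightarrow> (nat \<Rightarrow> 'w \<Rightarrow> 'd::finite \<Rightarrow> 'd \<Rightarrow> real) \<Rightarrow> nat \<Rightarrow> nat
    \<Rightarrow> 'w set \<Rightarrow> (real^'d) set" where
  "Qnode \<Omega> A \<pi> T t \<mu> = (\<lambda>z. nodeval z \<mu>) ` Qset \<Omega> A \<pi> T t"

definition no_arbitrage :: "'w set \<Rightarrow> (nat \<Rightarrow> 'w set set) \<Rightarrow> (nat \<Rightarrow> 'w \<Rightarrow> 'd::finite \<Rightarrow> 'd \<Rightarrow> real) \<Rightarrow> nat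
    \<Rightarrow> bool" where
  "no_arbitrage \<Omega> A \<pi> T \<longleftrightarrow> \<not> (\<exists>(y :: nat \<Rightarrow> 'w \<Rightarrow> real^'d) x.
      (\<forall>\<omega>\<in>\<Omega>. y 0 \<omega> = 0) \<and>
      (\<forall>s\<in>{1..Suc T}. meas A (s - 1) (y s)) \<and>
      (\<forall>\<omega>\<in>\<Omega>. y (Suc T) \<omega> = 0) \<and>
      (\<forall>t<T. (\<lambda>\<omega>. y t \<omega> - y (Suc t) \<omega>) \<in> Kset \<Omega> A \<pi> t) \<and>
      meas A T x \<and> (\<forall>\<omega>\<in>\<Omega>. \<forall>j. 0 \<le> x \<omega> $ j) \<and> (\<exists>\<omega>\<in>\<Omega>. x \<omega> \<noteq> 0) \<and>
      (\<lambda>\<omega>. y T \<omega> - x \<omega>) \<in> Kset \<Omega> A \<pi> T)"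

definition Ubd :: "'w set \<Rightarrow> (nat \<Rightarrow> 'w set set) \<Rightarrow> (nat \<Rightarrow> 'w \<Rightarrow> 'd::finite \<Rightarrow> 'd \<Rightarrow> real) \<Rightarrow> nat
    \<Rightarrow> (nat \<Rightarrow> 'w \<Rightarrow> real^'d) \<Rightarrow> nat \<Rightarrow> 'w set \<Rightarrow> (real^'d) set" where
  "Ubd \<Omega> A \<pi> T \<xi> t \<mu> = (\<lambda>q. - nodeval (\<xi> t) \<mu> + q) ` Qnode \<Omega> A \<pi> T t \<mu>"

text \<open>Backward recursion; Zaux n t mu is Z^{bd mu}_t when n = T - t.\<close>
fun Zaux :: "'w set \<Rightarrow> (nat \<Rightarrow> 'w set set) \<Rightarrow> (nat \<Rightarrow> 'w \<Rightarrow> 'd::finite \<Rightarrow> 'd \<Rightarrow> real) \<Rightarrow> nat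
    \<Rightarrow> (nat \<Rightarrow> 'w \<Rightarrow> real^'d) \<Rightarrow> nat \<Rightarrow> nat \<Rightarrow> 'w set \<Rightarrow> (real^'d) set" where
  "Zaux \<Omega> A \<pi> T \<xi> 0 t \<mu> = Ubd \<Omega> A \<pi> T \<xi> t \<mu>"
| "Zaux \<Omega> A \<pi> T \<xi> (Suc n) t \<mu> =
     (let W = (\<Inter>\<nu>\<in>succ A t \<mu>. Zaux \<Omega> A \<pi> T \<xi> n (Suc t) \<nu>);
          V = {w + q | w q. w \<in> W \<and> q \<in> Qnode \<Omega> A \<pi> T t \<mu>}
      in convex hull (Ubd \<Omega> A \<pi> T \<xi> t \<mu> \<union> V))"

definition Zbd :: "'w set \<Rightarrow> (nat \<Rightarrow> 'w set set) \<Rightarrow> (nat \<Rightarrow> 'w \<Rightarrow> 'd::finite \<Rightarrow> 'd \<Rightarrow> real) \<Rightarrow> nat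
    \<Rightarrow> (nat \<Rightarrow> 'w \<Rightarrow> real^'d) \<Rightarrow> nat \<Rightarrow> 'w set \<Rightarrow> (real^'d) set" where
  "Zbd \<Omega> A \<pi> T \<xi> t \<mu> = Zaux \<Omega> A \<pi> T \<xi> (T - t) t \<mu>"

definition recession_cone :: "'a::real_vector set \<Rightarrow> 'a set" where
  "recession_cone S = {y. \<forall>c::real\<ge>0. \<forall>a\<in>S. a + c *\<^sub>R y \<in> S}"

end

theory Submission
  imports Defs
begin


definition msum :: "'a::real_vector set \<Rightarrow> 'a set \<Rightarrow> 'a set" where
  "msum S T = {a + b | a b. a \<in> S \<and> b \<in> T}"

lemma msum_UN: "msum S T = (\<Union>x\<in>S. \<Union>y\<in>T. {x + y})"
  unfolding msum_def by auto

lemma polyhedral_cone_fg: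
  fixes C :: "'a::euclidean_space set"
  assumes "polyhedron C" "convex_cone C"
  shows "\<exists>G. finite G \<and> C = convex_cone hull G"
proof -
  define B :: "'a set" where "B = cbox (-One) One"
  have "polyhedron (C \<inter> B)" using assms(1) by (simp add: B_def)
  moreover have "bounded (C \<inter> B)" by (simp add: B_def bounded_Int)
  ultimately have "polytope (C \<inter> B)" by (simp add: polytope_eq_bounded_polyhedron)
  then obtain V where V: "finite V" "C \<inter> B = convex hull V" unfolding polytope_def by blast
  have "C = convex_cone hull V"
  proof
    show "convex_cone hull V \<subseteq> C"
    proof (rule hull_minimal)
      show "V \<subseteq> C" using V(2) hull_subset[of V convex] by blast
    qed (rule assms(2))
  next
    show "C \<subseteq> convex_cone hull V"
    proof
      fix x assume x: "x \<in> C"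
      show "x \<in> convex_cone hull V"
      proof (cases "x = 0")
        case True then show ?thesis by (simp add: convex_cone_hull_contains_0)
      next
        case False
        define c where "c = 1 / norm x"
        have c: "c > 0" using False by (simp add: c_def)
        have "c *\<^sub>R x \<in> C" using x c assms(2) by (simp add: convex_cone_scaleR)
        moreover have "c *\<^sub>R x \<in> B"
        proof -
          have n: "norm (c *\<^sub>R x) = 1" using False by (simp add: c_def)
          have "\<bar>(c *\<^sub>R x) \<bullet> i\<bar> \<le> 1" if "i \<in> Basis" for i
            using Basis_le_norm[OF that, of "c *\<^sub>R x"] n by simp
          then show ?thesis unfolding B_def mem_box
            by (simp add: inner_sum_Basis abs_le_iff)
        qed
        ultimately have "c *\<^sub>R x \<in> convex hull V" using V by blast
        then have "c *\<^sub>R x \<in> convex_cone hull V"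
          using convex_hull_subset_convex_cone_hull by blast
        then have "(1/c) *\<^sub>R (c *\<^sub>R x) \<in> convex_cone hull V"
          by (rule convex_cone_hull_mul) (use c in simp)
        moreover have "(1/c) *\<^sub>R (c *\<^sub>R x) = x" using c by simp
        ultimately show ?thesis by simp
      qed
    qed
  qed
  then show ?thesis using V by blast
qed

lemma hom_lemma:
  fixes P N :: "('a::euclidean_space \<times> real) set"
  assumes P1: "\<forall>p\<in>P. snd p = 1" and N0: "\<forall>n\<in>N. snd n = 0"
  shows "{x. (x, 1) \<in> convex_cone hull (P \<union> N)} = msum (convex hull (fst ` P)) (convex_cone hull (fst ` N))"
proof -
  have cN: "convex_cone hull N \<subseteq> {q. snd q = 0}"
  proof (rule hull_minimal)
    show "N \<subseteq> {q. snd q = 0}" using N0 by auto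
    show "convex_cone {q::'a\<times>real. snd q = 0}" by (simp add: convex_cone_iff)
  qed
  have cP: "convex hull P \<subseteq> {q. snd q = 1}"
  proof (rule hull_minimal)
    show "P \<subseteq> {q. snd q = 1}" using P1 by auto
    have "{q::'a\<times>real. snd q = 1} = {q. (0, 1) \<bullet> q = 1}" by (auto simp: inner_prod_def)
    then show "convex {q::'a\<times>real. snd q = 1}" using convex_hyperplane by metis
  qed
  show ?thesis
  proof
    show "{x. (x, 1) \<in> convex_cone hull (P \<union> N)} \<subseteq> msum (convex hull (fst ` P)) (convex_cone hull (fst ` N))"
    proof
      fix x assume "x \<in> {x. (x, 1) \<in> convex_cone hull (P \<union> N)}"
      then obtain p n where p: "p \<in> convex_cone hull P" and n: "n \<in> convex_cone hull N" and xe: "(x, 1) = p + n"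
        by (auto simp: convex_cone_hull_Un)
      have sn: "snd n = 0" using cN n by auto
      have "snd (x, 1::real) = snd p + snd n" unfolding xe by simp
      then have sp: "snd p = 1" using sn by simp
      have "P \<noteq> {}" using p sp by auto
      then have "p \<in> {c *\<^sub>R x | c x. 0 \<le> c \<and> x \<in> convex hull P}"
        using p by (simp only: convex_cone_hull_separate_nonempty[OF \<open>P \<noteq> {}\<close>] conic_hull_explicit)
      then obtain c h where c: "0 \<le> c" and h: "h \<in> convex hull P" and ph: "p = c *\<^sub>R h"
        by blast
      have "snd h = 1" using h cP by auto
      then have "c = 1" using sp ph by simp
      then have "p \<in> convex hull P" using h ph by simp
      then have fp: "fst p \<in> convex hull (fst ` P)" by (metis convex_hull_linear_image imageI linear_fst)
      have fn: "fst n \<in> convex_cone hull (fst ` N)" using n by (simp add: convex_cone_hull_linear_image linear_fst)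
      have "fst (x, 1::real) = fst p + fst n" unfolding xe by simp
      then have "x = fst p + fst n" by simp
      then show "x \<in> msum (convex hull (fst ` P)) (convex_cone hull (fst ` N))"
        using fp fn unfolding msum_def by blast
    qed
  next
    show "msum (convex hull (fst ` P)) (convex_cone hull (fst ` N)) \<subseteq> {x. (x, 1) \<in> convex_cone hull (P \<union> N)}"
    proof
      fix x assume "x \<in> msum (convex hull (fst ` P)) (convex_cone hull (fst ` N))"
      then obtain a b where x: "x = a + b" and a: "a \<in> convex hull (fst ` P)" and b: "b \<in> convex_cone hull (fst ` N)"
        unfolding msum_def by blast
      obtain p where p: "p \<in> convex hull P" "a = fst p"
        using a by (auto simp: convex_hull_linear_image[OF linear_fst, symmetric])
      obtain n where n: "n \<in> convex_cone hull N" "b = fst n"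
        using b by (metis convex_cone_hull_linear_image imageE linear_fst)
      have "snd p = 1" using p cP by auto
      moreover have "snd n = 0" using n cN by auto
      ultimately have eq: "(x, 1) = p + n" using x p n by (simp add: prod_eq_iff)
      have "p \<in> convex_cone hull (P \<union> N)"
        using p(1) convex_hull_subset_convex_cone_hull hull_mono[of P "P \<union> N" convex_cone] by blast
      moreover have "n \<in> convex_cone hull (P \<union> N)"
        using n(1) hull_mono[of N "P \<union> N" convex_cone] by blast
      ultimately show "x \<in> {x. (x, 1) \<in> convex_cone hull (P \<union> N)}"
        using eq convex_cone_hull_add[of p "P \<union> N" n] by simp
    qed
  qed
qed

lemma polyhedron_slice:
  fixes S :: "('a::euclidean_space \<times> real) set"
  assumes "polyhedron S"
  shows "polyhedron {x. (x, 1) \<in> S}"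
proof -
  obtain F where F: "finite F" "S = \<Inter>F" and h: "\<forall>h\<in>F. \<exists>a b. a \<noteq> 0 \<and> h = {x. a \<bullet> x \<le> b}"
    using assms unfolding polyhedron_def by blast
  obtain a b where ab0: "\<And>h. h \<in> F \<Longrightarrow> h = {x. a h \<bullet> x \<le> b h}"
    using h by metis
  have ab: "y \<in> h \<longleftrightarrow> a h \<bullet> y \<le> b h" if "h \<in> F" for h y
  proof -
    have "y \<in> h \<longleftrightarrow> y \<in> {x. a h \<bullet> x \<le> b h}"
      by (rule arg_cong[where f="\<lambda>S. y \<in> S", OF ab0[OF that]])
    then show ?thesis by simp
  qed
  have "{x. (x, 1) \<in> S} = \<Inter> ((\<lambda>h. {x. fst (a h) \<bullet> x \<le> b h - snd (a h)}) ` F)"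
  proof -
    have "(x, 1) \<in> h \<longleftrightarrow> fst (a h) \<bullet> x \<le> b h - snd (a h)" if "h \<in> F" for h x
      using ab[OF that, of "(x,1)"] by (auto simp: inner_prod_def)
    then show ?thesis using F(2) by auto
  qed
  moreover have "polyhedron (\<Inter> ((\<lambda>h. {x. fst (a h) \<bullet> x \<le> b h - snd (a h)}) ` F))"
    using F(1) by (intro polyhedron_Inter) (auto intro: polyhedron_halfspace_le)
  ultimately show ?thesis by simp
qed

lemma polyhedron_msum:
  fixes F G :: "'a::euclidean_space set"
  assumes "finite F" "finite G"
  shows "polyhedron (msum (convex hull F) (convex_cone hull G))"
proof -
  define P where "P = (\<lambda>f. (f, 1::real)) ` F"
  define N where "N = (\<lambda>g. (g, 0::real)) ` G"
  have e: "fst ` P = F" "fst ` N = G" unfolding P_def N_def by (force simp: image_image)+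
  have "{x. (x, 1) \<in> convex_cone hull (P \<union> N)} = msum (convex hull (fst ` P)) (convex_cone hull (fst ` N))"
    by (rule hom_lemma) (auto simp: P_def N_def)
  then have "msum (convex hull F) (convex_cone hull G) = {x. (x, 1) \<in> convex_cone hull (P \<union> N)}"
    unfolding e by simp
  moreover have "polyhedron (convex_cone hull (P \<union> N))"
    using assms by (intro polyhedron_convex_cone_hull) (auto simp: P_def N_def)
  ultimately show ?thesis using polyhedron_slice by metis
qed

lemma polyhedron_mw:
  fixes S :: "'a::euclidean_space set"
  assumes "polyhedron S" "S \<noteq> {}"
  shows "\<exists>F G. finite F \<and> F \<noteq> {} \<and> finite G \<and> S = msum (convex hull F) (convex_cone hull G)"
proof -
  obtain H where H: "finite H" "S = \<Inter>H" and h: "\<forall>h\<in>H. \<exists>a b. a \<noteq> 0 \<and> h = {x. a \<bullet> x \<le> b}"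
    using assms(1) unfolding polyhedron_def by blast
  obtain a b where ab0: "\<And>h. h \<in> H \<Longrightarrow> h = {x. a h \<bullet> x \<le> b h}"
    using h by metis
  have ab: "y \<in> h \<longleftrightarrow> a h \<bullet> y \<le> b h" if "h \<in> H" for h y
  proof -
    have "y \<in> h \<longleftrightarrow> y \<in> {x. a h \<bullet> x \<le> b h}"
      by (rule arg_cong[where f="\<lambda>S. y \<in> S", OF ab0[OF that]])
    then show ?thesis by simp
  qed
  define C :: "('a \<times> real) set" where "C = {p. 0 \<le> snd p \<and> (\<forall>h\<in>H. a h \<bullet> fst p \<le> b h * snd p)}"
  have Ceq: "C = \<Inter> (insert {p. (0, -1) \<bullet> p \<le> 0} ((\<lambda>h. {p. (a h, - b h) \<bullet> p \<le> 0}) ` H))"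
    unfolding C_def by (auto simp: inner_prod_def)
  have polC: "polyhedron C" unfolding Ceq using H(1)
    by (intro polyhedron_Inter) (auto intro: polyhedron_halfspace_le)
  have ccC: "convex_cone C" unfolding Ceq
    by (intro convex_cone_Inter) (auto intro: convex_cone_halfspace_le)
  obtain G0 where G0: "finite G0" "C = convex_cone hull G0"
    using polyhedral_cone_fg[OF polC ccC] by blast
  have G0C: "G0 \<subseteq> C" unfolding G0(2) by (rule hull_subset)
  define Pp where "Pp = {g\<in>G0. snd g > 0}"
  define N where "N = {g\<in>G0. snd g = 0}"
  define P where "P = (\<lambda>g. (1 / snd g) *\<^sub>R g) ` Pp"
  have P1: "\<forall>p\<in>P. snd p = 1" by (auto simp: P_def Pp_def)
  have N0: "\<forall>n\<in>N. snd n = 0" by (auto simp: N_def)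
  have finP: "finite P" unfolding P_def Pp_def using G0(1) by simp
  have finN: "finite N" unfolding N_def using G0(1) by simp
  have hulleq: "convex_cone hull G0 = convex_cone hull (P \<union> N)"
  proof
    show "convex_cone hull G0 \<subseteq> convex_cone hull (P \<union> N)"
    proof (rule hull_minimal)
      show "G0 \<subseteq> convex_cone hull (P \<union> N)"
      proof
        fix g assume g: "g \<in> G0"
        show "g \<in> convex_cone hull (P \<union> N)"
        proof (cases "snd g > 0")
          case True
          then have "(1 / snd g) *\<^sub>R g \<in> P \<union> N" using g by (auto simp: P_def Pp_def)
          then have "(1 / snd g) *\<^sub>R g \<in> convex_cone hull (P \<union> N)" by (rule hull_inc)
          then have "snd g *\<^sub>R ((1 / snd g) *\<^sub>R g) \<in> convex_cone hull (P \<union> N)"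
            by (rule convex_cone_hull_mul) (use True in simp)
          then show ?thesis using True by simp
        next
          case False
          then have "g \<in> N" using g G0C by (auto simp: N_def C_def)
          then show ?thesis by (auto intro: hull_inc)
        qed
      qed
    qed (rule convex_cone_convex_cone_hull)
  next
    show "convex_cone hull (P \<union> N) \<subseteq> convex_cone hull G0"
    proof (rule hull_minimal)
      show "P \<union> N \<subseteq> convex_cone hull G0"
      proof
        fix x assume "x \<in> P \<union> N"
        then show "x \<in> convex_cone hull G0"
        proof
          assume "x \<in> P"
          then obtain g where g: "g \<in> G0" "snd g > 0" "x = (1 / snd g) *\<^sub>R g"
            by (auto simp: P_def Pp_def)
          have "g \<in> convex_cone hull G0" using g(1) by (rule hull_inc)
          then show ?thesis unfolding g(3) by (rule convex_cone_hull_mul) (use g(2) in simp)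
        next
          assume "x \<in> N" then show ?thesis by (auto simp: N_def intro: hull_inc)
        qed
      qed
    qed (rule convex_cone_convex_cone_hull)
  qed
  have Seq: "S = {x. (x, 1) \<in> C}"
    using H(2) by (auto simp: C_def ab)
  then have Seq2: "S = msum (convex hull (fst ` P)) (convex_cone hull (fst ` N))"
    using hom_lemma[OF P1 N0] G0(2) hulleq by simp
  have "fst ` P \<noteq> {}"
  proof
    assume "fst ` P = {}"
    then have "S = {}" unfolding Seq2 msum_def by simp
    then show False using assms(2) by simp
  qed
  then show ?thesis using Seq2 finP finN by blast
qed

lemma recession_limit:
  fixes C :: "'a::euclidean_space set"
  assumes F: "finite F" and C: "closed C" "convex_cone C"
    and h: "\<forall>l\<ge>0. p + l *\<^sub>R y \<in> msum (convex hull F) C"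
  shows "y \<in> C"
proof -
  obtain M where M: "\<And>f. f \<in> convex hull F \<Longrightarrow> norm f \<le> M"
    using finite_imp_bounded_convex_hull[OF F] unfolding bounded_iff by blast
  have "\<forall>e>0. \<exists>z\<in>C. dist z y < e"
  proof (intro allI impI)
    fix e :: real assume e: "e > 0"
    define l where "l = (norm p + \<bar>M\<bar> + 1) / e"
    have l: "l > 0" unfolding l_def using e by (simp add: add_nonneg_pos)
    have "p + l *\<^sub>R y \<in> msum (convex hull F) C" using h l by simp
    then obtain f c where f: "f \<in> convex hull F" and c: "c \<in> C" and eq: "p + l *\<^sub>R y = f + c"
      unfolding msum_def by blast
    have z: "(1/l) *\<^sub>R c \<in> C" using C(2) c l by (simp add: convex_cone_scaleR)
    have ceq: "c = p + l *\<^sub>R y - f" using eq by (simp add: algebra_simps)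
    have "(1/l) *\<^sub>R c - y = (1/l) *\<^sub>R (p - f)"
      unfolding ceq using l by (simp add: algebra_simps)
    then have "dist ((1/l) *\<^sub>R c) y = (1/l) * norm (p - f)"
      using l by (simp add: dist_norm)
    also have "\<dots> \<le> (1/l) * (norm p + \<bar>M\<bar>)"
    proof -
      have "norm (p - f) \<le> norm p + norm f" by (rule norm_triangle_ineq4)
      also have "\<dots> \<le> norm p + \<bar>M\<bar>" using M[OF f] by simp
      finally have "norm (p - f) \<le> norm p + \<bar>M\<bar>" .
      then show ?thesis using l by (intro mult_left_mono) auto
    qed
    also have "\<dots> < e"
    proof -
      have "norm p + \<bar>M\<bar> < e * l" unfolding l_def using e by simp
      then show ?thesis using l by (simp add: field_simps)
    qed
    finally show "\<exists>z\<in>C. dist z y < e" using z by blast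
  qed
  then show ?thesis using closed_approachable[OF C(1)] by blast
qed

lemma hull_union_msum:
  assumes C: "convex_cone C" and F: "F \<noteq> {}"
  shows "convex hull (msum {a} C \<union> msum (convex hull F) C) = msum (convex hull (insert a F)) C"
proof
  have cvC: "convex C" using C by (simp add: convex_cone_def)
  show "convex hull (msum {a} C \<union> msum (convex hull F) C) \<subseteq> msum (convex hull (insert a F)) C"
  proof (rule hull_minimal)
    have "a \<in> convex hull (insert a F)" by (rule hull_inc) simp
    moreover have "convex hull F \<subseteq> convex hull (insert a F)" by (rule hull_mono) blast
    ultimately show "msum {a} C \<union> msum (convex hull F) C \<subseteq> msum (convex hull (insert a F)) C"
      unfolding msum_def by blast
    show "convex (msum (convex hull (insert a F)) C)"
      unfolding msum_UN by (rule convex_sums[OF convex_convex_hull cvC])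
  qed
next
  show "msum (convex hull (insert a F)) C \<subseteq> convex hull (msum {a} C \<union> msum (convex hull F) C)"
  proof
    fix x assume "x \<in> msum (convex hull (insert a F)) C"
    then obtain c q where x: "x = c + q" and c: "c \<in> convex hull (insert a F)" and q: "q \<in> C"
      unfolding msum_def by blast
    obtain u v b where uv: "0 \<le> u" "0 \<le> v" "u + v = 1" and b: "b \<in> convex hull F"
      and ce: "c = u *\<^sub>R a + v *\<^sub>R b"
      using c unfolding convex_hull_insert[OF F] by blast
    have "a + q \<in> msum {a} C \<union> msum (convex hull F) C" using q unfolding msum_def by blast
    moreover have "b + q \<in> msum {a} C \<union> msum (convex hull F) C" using q b unfolding msum_def by blast
    ultimately have "u *\<^sub>R (a + q) + v *\<^sub>R (b + q) \<in> convex hull (msum {a} C \<union> msum (convex hull F) C)"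
      using uv by (intro convexD[OF convex_convex_hull]) (auto intro: hull_inc)
    moreover have "u *\<^sub>R (a + q) + v *\<^sub>R (b + q) = x"
    proof -
      have "u *\<^sub>R (a + q) + v *\<^sub>R (b + q) = u *\<^sub>R a + v *\<^sub>R b + (u + v) *\<^sub>R q"
        by (simp add: algebra_simps)
      then show ?thesis using uv(3) x ce by simp
    qed
    ultimately show "x \<in> convex hull (msum {a} C \<union> msum (convex hull F) C)" by simp
  qed
qed

lemma msum_absorb:
  assumes C: "convex_cone C" and Y: "Y \<subseteq> C" "0 \<in> Y"
  shows "msum (msum X Y) C = msum X C"
proof
  show "msum (msum X Y) C \<subseteq> msum X C"
  proof
    fix z assume "z \<in> msum (msum X Y) C"
    then obtain x y c where "z = x + y + c" "x \<in> X" "y \<in> Y" "c \<in> C" unfolding msum_def by blast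
    moreover have "y + c \<in> C" using C Y \<open>y \<in> Y\<close> \<open>c \<in> C\<close> by (auto intro: convex_cone_add)
    ultimately show "z \<in> msum X C" unfolding msum_def by (metis (mono_tags, lifting) add.assoc mem_Collect_eq)
  qed
next
  show "msum X C \<subseteq> msum (msum X Y) C"
  proof
    fix z assume "z \<in> msum X C"
    then obtain x c where "z = x + c" "x \<in> X" "c \<in> C" unfolding msum_def by blast
    moreover have "x + 0 \<in> msum X Y" using \<open>x \<in> X\<close> Y(2) unfolding msum_def by blast
    ultimately show "z \<in> msum (msum X Y) C" unfolding msum_def by force
  qed
qed



lemma convex_cone_sum:
  assumes "convex_cone C" "finite I" "\<And>i. i \<in> I \<Longrightarrow> f i \<in> C"
  shows "sum f I \<in> C"
  using assms(2,3)
proof (induction I rule: finite_induct)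
  case empty then show ?case using assms(1) by (simp add: convex_cone_contains_0)
next
  case (insert i I) then show ?case using assms(1) by (simp add: convex_cone_add)
qed

lemma Kcone_fg:
  fixes \<pi> :: "nat \<Rightarrow> 'w \<Rightarrow> 'd::finite \<Rightarrow> 'd \<Rightarrow> real"
  shows "\<exists>G. finite G \<and> Kcone \<pi> t \<omega> = convex_cone hull G"
proof -
  have e1: "{axis j 1 | j. True} = range (\<lambda>j::'d. axis j (1::real))" by auto
  have e2: "{\<pi> t \<omega> j k *\<^sub>R axis j 1 - axis k 1 | j k. True} =
      (\<lambda>(j,k). \<pi> t \<omega> j k *\<^sub>R axis j (1::real) - axis k 1) ` (UNIV :: ('d \<times> 'd) set)" by auto
  have "finite ({axis j 1 | j. True} \<union> {\<pi> t \<omega> j k *\<^sub>R axis j 1 - axis k (1::real) | j k. True})"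
    unfolding e1 e2 by simp
  then show ?thesis unfolding Kcone_def by blast
qed

lemma Kcone_cc: "convex_cone (Kcone \<pi> t \<omega>)"
  unfolding Kcone_def by (rule convex_cone_convex_cone_hull)

lemma Kcone_0: "0 \<in> Kcone \<pi> t \<omega>"
  unfolding Kcone_def by (rule convex_cone_hull_contains_0)

lemma Kcone_pos:
  fixes x :: "real^'d"
  assumes "\<forall>j. 0 \<le> x $ j"
  shows "x \<in> Kcone \<pi> t \<omega>"
proof -
  have "x = (\<Sum>i\<in>UNIV. x $ i *\<^sub>R axis i 1)"
    using basis_expansion[of x] by (simp add: scalar_mult_eq_scaleR)
  moreover have "(\<Sum>i\<in>UNIV. x $ i *\<^sub>R axis i 1) \<in> Kcone \<pi> t \<omega>"
  proof (rule convex_cone_sum[OF Kcone_cc])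
    fix i :: 'd
    have "axis i 1 \<in> Kcone \<pi> t \<omega>" unfolding Kcone_def by (rule hull_inc) blast
    moreover have "convex_cone (Kcone \<pi> t \<omega>)" by (rule Kcone_cc)
    moreover have "0 \<le> x $ i" using assms by blast
    ultimately show "x $ i *\<^sub>R axis i 1 \<in> Kcone \<pi> t \<omega>"
      using convex_cone_scaleR by blast
  qed simp
  ultimately show ?thesis by simp
qed

definition glue :: "'w set set \<Rightarrow> ('w set \<Rightarrow> 'w \<Rightarrow> 'b::zero) \<Rightarrow> 'w \<Rightarrow> 'b" where
  "glue B f \<omega> = (if \<exists>\<nu>\<in>B. \<omega> \<in> \<nu> then f (SOME \<nu>. \<nu> \<in> B \<and> \<omega> \<in> \<nu>) \<omega> else 0)"

lemma glue_out: "\<not> (\<exists>\<nu>\<in>B. \<omega> \<in> \<nu>) \<Longrightarrow> glue B f \<omega> = 0"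
  unfolding glue_def by simp

lemma glue_diff:
  fixes f g :: "'w set \<Rightarrow> 'w \<Rightarrow> 'b::ab_group_add"
  shows "glue B f \<omega> - glue B g \<omega> = glue B (\<lambda>\<nu> \<omega>. f \<nu> \<omega> - g \<nu> \<omega>) \<omega>"
  unfolding glue_def by simp

locale mkt =
  fixes \<Omega> :: "'w set" and A :: "nat \<Rightarrow> 'w set set" and T :: nat
    and \<pi> :: "nat \<Rightarrow> 'w \<Rightarrow> 'd::finite \<Rightarrow> 'd \<Rightarrow> real"
  assumes filt: "finite_filtration \<Omega> A T"
    and rates_meas: "\<forall>t\<le>T. meas A t (\<pi> t)"
begin

lemma filt_parts: "finite \<Omega>" "\<forall>t\<le>T. is_partition \<Omega> (A t)"
    "\<forall>t<T. \<forall>\<nu>\<in>A (Suc t). \<exists>\<mu>\<in>A t. \<nu> \<subseteq> \<mu>"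
  using filt by (simp_all add: finite_filtration_def)

lemma part: "t \<le> T \<Longrightarrow> is_partition \<Omega> (A t)"
  using filt_parts(2) by simp

lemma part_parts:
  assumes "t \<le> T"
  shows "\<forall>\<mu>\<in>A t. \<mu> \<noteq> {} \<and> \<mu> \<subseteq> \<Omega>" "\<Union>(A t) = \<Omega>"
    "\<forall>\<mu>\<in>A t. \<forall>\<nu>\<in>A t. \<mu> \<noteq> \<nu> \<longrightarrow> \<mu> \<inter> \<nu> = {}"
  using part[OF assms] unfolding is_partition_def by simp_all

lemma atom_ne: "t \<le> T \<Longrightarrow> \<mu> \<in> A t \<Longrightarrow> \<mu> \<noteq> {}"
  using part_parts(1) by simp

lemma atom_sub: "t \<le> T \<Longrightarrow> \<mu> \<in> A t \<Longrightarrow> \<mu> \<subseteq> \<Omega>"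
  using part_parts(1) by simp

lemma atom_ex: "t \<le> T \<Longrightarrow> \<omega> \<in> \<Omega> \<Longrightarrow> \<exists>\<mu>\<in>A t. \<omega> \<in> \<mu>"
proof -
  assume "t \<le> T" "\<omega> \<in> \<Omega>"
  then have "\<omega> \<in> \<Union>(A t)" using part_parts(2) by simp
  then show ?thesis by (rule UnionE) blast
qed

lemma atom_disj: "t \<le> T \<Longrightarrow> \<mu> \<in> A t \<Longrightarrow> \<nu> \<in> A t \<Longrightarrow> \<omega> \<in> \<mu> \<Longrightarrow> \<omega> \<in> \<nu> \<Longrightarrow> \<mu> = \<nu>"
proof (rule ccontr)
  assume a: "t \<le> T" "\<mu> \<in> A t" "\<nu> \<in> A t" "\<omega> \<in> \<mu>" "\<omega> \<in> \<nu>" "\<mu> \<noteq> \<nu>"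
  then have "\<mu> \<inter> \<nu> = {}" using part_parts(3)[OF a(1)] by blast
  then show False using a(4,5) by blast
qed

lemma finite_Omega: "finite \<Omega>"
  by (rule filt_parts(1))

lemma refine_step: "t < T \<Longrightarrow> \<nu> \<in> A (Suc t) \<Longrightarrow> \<exists>\<mu>\<in>A t. \<nu> \<subseteq> \<mu>"
  using filt_parts(3) by simp

lemma refine: "s \<le> r \<Longrightarrow> r \<le> T \<Longrightarrow> \<alpha> \<in> A r \<Longrightarrow> \<exists>\<beta>\<in>A s. \<alpha> \<subseteq> \<beta>"
proof (induction r arbitrary: \<alpha>)
  case 0 then show ?case by auto
next
  case (Suc r)
  show ?case
  proof (cases "s = Suc r")
    case True then show ?thesis using Suc.prems by auto
  next
    case False
    then have "s \<le> r" using Suc.prems by simp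
    obtain \<mu> where "\<mu> \<in> A r" "\<alpha> \<subseteq> \<mu>" using refine_step[of r \<alpha>] Suc.prems by auto
    then obtain \<beta> where "\<beta> \<in> A s" "\<mu> \<subseteq> \<beta>" using Suc.IH[of \<mu>] \<open>s \<le> r\<close> Suc.prems by auto
    then show ?thesis using \<open>\<alpha> \<subseteq> \<mu>\<close> by blast
  qed
qed

lemma meas_mono: "meas A s x \<Longrightarrow> s \<le> r \<Longrightarrow> r \<le> T \<Longrightarrow> meas A r x"
  unfolding meas_def
proof (intro ballI)
  fix \<alpha> \<omega> \<omega>'
  assume m: "\<forall>\<mu>\<in>A s. \<forall>\<omega>\<in>\<mu>. \<forall>\<omega>'\<in>\<mu>. x \<omega> = x \<omega>'" and sr: "s \<le> r" "r \<le> T"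
    and a: "\<alpha> \<in> A r" "\<omega> \<in> \<alpha>" "\<omega>' \<in> \<alpha>"
  obtain \<beta> where "\<beta> \<in> A s" "\<alpha> \<subseteq> \<beta>" using refine[OF sr a(1)] by blast
  then show "x \<omega> = x \<omega>'" using m a by blast
qed

lemma meas_diff: "meas A t x \<Longrightarrow> meas A t y \<Longrightarrow> meas A t (\<lambda>\<omega>. x \<omega> - y \<omega>)"
  unfolding meas_def
proof (intro ballI)
  fix \<alpha> \<omega> \<omega>'
  assume m: "\<forall>\<mu>\<in>A t. \<forall>\<omega>\<in>\<mu>. \<forall>\<omega>'\<in>\<mu>. x \<omega> = x \<omega>'" "\<forall>\<mu>\<in>A t. \<forall>\<omega>\<in>\<mu>. \<forall>\<omega>'\<in>\<mu>. y \<omega> = y \<omega>'"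
    and a: "\<alpha> \<in> A t" "\<omega> \<in> \<alpha>" "\<omega>' \<in> \<alpha>"
  have "x \<omega> = x \<omega>'" "y \<omega> = y \<omega>'" using m a by blast+
  then show "x \<omega> - y \<omega> = x \<omega>' - y \<omega>'" by simp
qed

lemma meas_ind: "t \<le> T \<Longrightarrow> \<mu> \<in> A t \<Longrightarrow> meas A t (\<lambda>\<omega>. if \<omega> \<in> \<mu> then c else d)"
  unfolding meas_def
proof (intro ballI)
  fix \<alpha> \<omega> \<omega>' assume a: "t \<le> T" "\<mu> \<in> A t" "\<alpha> \<in> A t" "\<omega> \<in> \<alpha>" "\<omega>' \<in> \<alpha>"
  show "(if \<omega> \<in> \<mu> then c else d) = (if \<omega>' \<in> \<mu> then c else d)"
  proof (cases "\<alpha> = \<mu>")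
    case True then show ?thesis using a by simp
  next
    case False
    then have "\<omega> \<notin> \<mu>" "\<omega>' \<notin> \<mu>" using atom_disj[of t \<alpha> \<mu>] a by blast+
    then show ?thesis by simp
  qed
qed

lemma nodeval_eq: "t \<le> T \<Longrightarrow> \<mu> \<in> A t \<Longrightarrow> meas A t x \<Longrightarrow> \<omega> \<in> \<mu> \<Longrightarrow> nodeval x \<mu> = x \<omega>"
proof -
  assume a: "t \<le> T" "\<mu> \<in> A t" "meas A t x" "\<omega> \<in> \<mu>"
  have "(SOME \<omega>. \<omega> \<in> \<mu>) \<in> \<mu>" using a(4) by (rule someI)
  moreover have "\<forall>\<omega>\<in>\<mu>. \<forall>\<omega>'\<in>\<mu>. x \<omega> = x \<omega>'" using a(3) a(2) unfolding meas_def by (rule bspec)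
  ultimately have "x (SOME \<omega>. \<omega> \<in> \<mu>) = x \<omega>" using a(4) by blast
  then show ?thesis unfolding nodeval_def .
qed

lemma succ_sub: "\<nu> \<in> succ A t \<mu> \<Longrightarrow> \<nu> \<in> A (Suc t) \<and> \<nu> \<subseteq> \<mu>"
  unfolding succ_def by blast

lemma succ_cover: "t < T \<Longrightarrow> \<mu> \<in> A t \<Longrightarrow> \<omega> \<in> \<mu> \<Longrightarrow> \<exists>\<nu>\<in>succ A t \<mu>. \<omega> \<in> \<nu>"
proof -
  assume a: "t < T" "\<mu> \<in> A t" "\<omega> \<in> \<mu>"
  then have "\<omega> \<in> \<Omega>" using atom_sub[of t \<mu>] by auto
  then obtain \<nu> where \<nu>: "\<nu> \<in> A (Suc t)" "\<omega> \<in> \<nu>" using atom_ex[of "Suc t" \<omega>] a by auto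
  then obtain \<mu>' where "\<mu>' \<in> A t" "\<nu> \<subseteq> \<mu>'" using refine_step a by blast
  then have "\<mu>' = \<mu>" using atom_disj[of t \<mu>' \<mu> \<omega>] a \<nu> by auto
  then show ?thesis using \<nu> \<open>\<nu> \<subseteq> \<mu>'\<close> unfolding succ_def by blast
qed

lemma succ_ne: "t < T \<Longrightarrow> \<mu> \<in> A t \<Longrightarrow> succ A t \<mu> \<noteq> {}"
  using succ_cover atom_ne[of t \<mu>] by fastforce

lemma succ_finite: "t < T \<Longrightarrow> finite (succ A t \<mu>)"
proof -
  assume "t < T"
  then have "succ A t \<mu> \<subseteq> Pow \<Omega>" using atom_sub[of "Suc t"] unfolding succ_def by auto
  then show ?thesis using finite_Omega by (meson finite_Pow_iff finite_subset)
qed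

lemma Kcone_node: "t \<le> T \<Longrightarrow> \<mu> \<in> A t \<Longrightarrow> \<omega> \<in> \<mu> \<Longrightarrow> \<omega>' \<in> \<mu> \<Longrightarrow> Kcone \<pi> t \<omega> = Kcone \<pi> t \<omega>'"
proof -
  assume a: "t \<le> T" "\<mu> \<in> A t" "\<omega> \<in> \<mu>" "\<omega>' \<in> \<mu>"
  then have "\<pi> t \<omega> = \<pi> t \<omega>'" using rates_meas unfolding meas_def by blast
  then show ?thesis unfolding Kcone_def by simp
qed

lemma glue_in:
  assumes "s0 \<le> T" "B \<subseteq> A s0" "\<nu> \<in> B" "\<omega> \<in> \<nu>"
  shows "glue B f \<omega> = f \<nu> \<omega>"
proof -
  have ex: "\<exists>\<nu>. \<nu> \<in> B \<and> \<omega> \<in> \<nu>" using assms by blast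
  define \<nu>' where "\<nu>' = (SOME \<nu>. \<nu> \<in> B \<and> \<omega> \<in> \<nu>)"
  have "\<nu>' \<in> B \<and> \<omega> \<in> \<nu>'" unfolding \<nu>'_def using someI_ex[OF ex] .
  then have "\<nu>' = \<nu>" using atom_disj[of s0 \<nu>' \<nu> \<omega>] assms by blast
  then show ?thesis unfolding glue_def using assms \<nu>'_def by auto
qed

lemma glue_meas:
  assumes "s0 \<le> r" "r \<le> T" "B \<subseteq> A s0" "\<forall>\<nu>\<in>B. meas A r (f \<nu>)"
  shows "meas A r (glue B f)"
  unfolding meas_def
proof (intro ballI)
  fix \<alpha> \<omega> \<omega>' assume \<alpha>: "\<alpha> \<in> A r" and w: "\<omega> \<in> \<alpha>" "\<omega>' \<in> \<alpha>"
  obtain \<beta> where \<beta>: "\<beta> \<in> A s0" "\<alpha> \<subseteq> \<beta>" using refine[OF assms(1,2) \<alpha>] by blast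
  show "glue B f \<omega> = glue B f \<omega>'"
  proof (cases "\<beta> \<in> B")
    case True
    have "glue B f \<omega> = f \<beta> \<omega>" using glue_in[of s0 B \<beta> \<omega>] assms True \<beta> w by auto
    moreover have "glue B f \<omega>' = f \<beta> \<omega>'" using glue_in[of s0 B \<beta> \<omega>'] assms True \<beta> w by auto
    moreover have "f \<beta> \<omega> = f \<beta> \<omega>'" using assms(4) True \<alpha> w unfolding meas_def by blast
    ultimately show ?thesis by simp
  next
    case False
    have "\<not> (\<exists>\<nu>\<in>B. x \<in> \<nu>)" if "x \<in> \<alpha>" for x
    proof
      assume "\<exists>\<nu>\<in>B. x \<in> \<nu>"
      then obtain \<nu> where "\<nu> \<in> B" "x \<in> \<nu>" by blast
      then have "\<nu> = \<beta>" using atom_disj[of s0 \<nu> \<beta> x] assms \<beta> that by auto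
      then show False using False \<open>\<nu> \<in> B\<close> by simp
    qed
    then show ?thesis using w by (simp add: glue_out)
  qed
qed

lemma glue_K:
  assumes "s0 \<le> r" "r \<le> T" "B \<subseteq> A s0" "\<forall>\<nu>\<in>B. f \<nu> \<in> Kset \<Omega> A \<pi> r"
  shows "glue B f \<in> Kset \<Omega> A \<pi> r"
proof -
  have "meas A r (glue B f)" using assms glue_meas[of s0 r B f] unfolding Kset_def by blast
  moreover have "glue B f \<omega> \<in> Kcone \<pi> r \<omega>" if "\<omega> \<in> \<Omega>" for \<omega>
  proof (cases "\<exists>\<nu>\<in>B. \<omega> \<in> \<nu>")
    case True
    then obtain \<nu> where "\<nu> \<in> B" "\<omega> \<in> \<nu>" by blast
    then have "glue B f \<omega> = f \<nu> \<omega>" using glue_in assms by (meson order_trans)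
    then show ?thesis using assms(4) \<open>\<nu> \<in> B\<close> that unfolding Kset_def by auto
  next
    case False then show ?thesis by (simp add: glue_out Kcone_0)
  qed
  ultimately show ?thesis unfolding Kset_def by blast
qed

lemma glue_Q:
  assumes s0: "s0 \<le> T" and B: "B \<subseteq> A s0" and f: "\<forall>\<nu>\<in>B. f \<nu> \<in> Qset \<Omega> A \<pi> T s0"
  shows "glue B f \<in> Qset \<Omega> A \<pi> T s0"
proof -
  define Pr where "Pr \<nu> y \<longleftrightarrow>
        (\<forall>s\<in>{Suc s0..Suc T}. meas A (s - 1) (y s)) \<and>
        (\<forall>\<omega>\<in>\<Omega>. y (Suc T) \<omega> = 0) \<and>
        (\<lambda>\<omega>. f \<nu> \<omega> - y (Suc s0) \<omega>) \<in> Kset \<Omega> A \<pi> s0 \<and>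
        (\<forall>s\<in>{Suc s0..T}. (\<lambda>\<omega>. y s \<omega> - y (Suc s) \<omega>) \<in> Kset \<Omega> A \<pi> s)"
    for \<nu> and y :: "nat \<Rightarrow> 'w \<Rightarrow> real^'d"
  have "\<forall>\<nu>\<in>B. \<exists>y. Pr \<nu> y"
  proof
    fix \<nu> assume "\<nu> \<in> B"
    then have "f \<nu> \<in> Qset \<Omega> A \<pi> T s0" using f by blast
    then show "\<exists>y. Pr \<nu> y" unfolding Qset_def Pr_def mem_Collect_eq by (elim conjE)
  qed
  then have "\<exists>Y. \<forall>\<nu>\<in>B. Pr \<nu> (Y \<nu>)" by (rule bchoice)
  then obtain Y where Y0: "\<forall>\<nu>\<in>B. Pr \<nu> (Y \<nu>)" by (rule exE)
  have Y1: "meas A (s - 1) (Y \<nu> s)" if "\<nu> \<in> B" "s \<in> {Suc s0..Suc T}" for \<nu> s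
  proof -
    have "Pr \<nu> (Y \<nu>)" using Y0 that(1) by blast
    then show ?thesis unfolding Pr_def using that(2) by blast
  qed
  have Y2: "Y \<nu> (Suc T) \<omega> = 0" if "\<nu> \<in> B" "\<omega> \<in> \<Omega>" for \<nu> \<omega>
  proof -
    have "Pr \<nu> (Y \<nu>)" using Y0 that(1) by blast
    then show ?thesis unfolding Pr_def using that(2) by blast
  qed
  have Y3: "(\<lambda>\<omega>. f \<nu> \<omega> - Y \<nu> (Suc s0) \<omega>) \<in> Kset \<Omega> A \<pi> s0" if "\<nu> \<in> B" for \<nu>
  proof -
    have "Pr \<nu> (Y \<nu>)" using Y0 that(1) by blast
    then show ?thesis unfolding Pr_def by (elim conjE)
  qed
  have Y4: "(\<lambda>\<omega>. Y \<nu> s \<omega> - Y \<nu> (Suc s) \<omega>) \<in> Kset \<Omega> A \<pi> s" if "\<nu> \<in> B" "s \<in> {Suc s0..T}" for \<nu> s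
  proof -
    have "Pr \<nu> (Y \<nu>)" using Y0 that(1) by blast
    then have "\<forall>s\<in>{Suc s0..T}. (\<lambda>\<omega>. Y \<nu> s \<omega> - Y \<nu> (Suc s) \<omega>) \<in> Kset \<Omega> A \<pi> s"
      unfolding Pr_def by (elim conjE)
    then show ?thesis using that(2) by blast
  qed
  define yy where "yy s = glue B (\<lambda>\<nu>. Y \<nu> s)" for s
  have fm: "\<forall>\<nu>\<in>B. meas A s0 (f \<nu>)" using f unfolding Qset_def mem_Collect_eq by blast
  have "meas A s0 (glue B f)" using glue_meas[OF order_refl s0 B fm] .
  moreover have "\<forall>s\<in>{Suc s0..Suc T}. meas A (s - 1) (yy s)"
  proof
    fix s assume s: "s \<in> {Suc s0..Suc T}"
    have "s0 \<le> s - 1" "s - 1 \<le> T" using s by auto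
    moreover have "\<forall>\<nu>\<in>B. meas A (s - 1) (Y \<nu> s)" using Y1 s by blast
    ultimately show "meas A (s - 1) (yy s)" unfolding yy_def
      using glue_meas[of s0 "s - 1" B "\<lambda>\<nu>. Y \<nu> s"] B by blast
  qed
  moreover have "\<forall>\<omega>\<in>\<Omega>. yy (Suc T) \<omega> = 0"
  proof
    fix \<omega> assume w: "\<omega> \<in> \<Omega>"
    show "yy (Suc T) \<omega> = 0"
    proof (cases "\<exists>\<nu>\<in>B. \<omega> \<in> \<nu>")
      case True
      then obtain \<nu> where nu: "\<nu> \<in> B" "\<omega> \<in> \<nu>" by blast
      have "yy (Suc T) \<omega> = Y \<nu> (Suc T) \<omega>" unfolding yy_def by (rule glue_in[OF s0 B nu])
      then show ?thesis using Y2[OF nu(1) w] by simp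
    next
      case False then show ?thesis unfolding yy_def by (simp add: glue_out)
    qed
  qed
  moreover have "(\<lambda>\<omega>. glue B f \<omega> - yy (Suc s0) \<omega>) \<in> Kset \<Omega> A \<pi> s0"
  proof -
    have "(\<lambda>\<omega>. glue B f \<omega> - yy (Suc s0) \<omega>) = glue B (\<lambda>\<nu> \<omega>. f \<nu> \<omega> - Y \<nu> (Suc s0) \<omega>)"
      unfolding yy_def by (rule ext, rule glue_diff)
    also have "\<dots> \<in> Kset \<Omega> A \<pi> s0"
      using glue_K[OF order_refl s0 B, of "\<lambda>\<nu> \<omega>. f \<nu> \<omega> - Y \<nu> (Suc s0) \<omega>"] Y3 by blast
    finally show ?thesis .
  qed
  moreover have "\<forall>s\<in>{Suc s0..T}. (\<lambda>\<omega>. yy s \<omega> - yy (Suc s) \<omega>) \<in> Kset \<Omega> A \<pi> s"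
  proof
    fix s assume s: "s \<in> {Suc s0..T}"
    have "(\<lambda>\<omega>. yy s \<omega> - yy (Suc s) \<omega>) = glue B (\<lambda>\<nu> \<omega>. Y \<nu> s \<omega> - Y \<nu> (Suc s) \<omega>)"
      unfolding yy_def by (rule ext, rule glue_diff)
    also have "\<dots> \<in> Kset \<Omega> A \<pi> s"
    proof (rule glue_K[of s0 s B])
      show "s0 \<le> s" "s \<le> T" using s by auto
      show "B \<subseteq> A s0" by (rule B)
      show "\<forall>\<nu>\<in>B. (\<lambda>\<omega>. Y \<nu> s \<omega> - Y \<nu> (Suc s) \<omega>) \<in> Kset \<Omega> A \<pi> s" using Y4 s by blast
    qed
    finally show "(\<lambda>\<omega>. yy s \<omega> - yy (Suc s) \<omega>) \<in> Kset \<Omega> A \<pi> s" .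
  qed
  ultimately show ?thesis unfolding Qset_def by blast
qed

lemma Qset_meas: "z \<in> Qset \<Omega> A \<pi> T t \<Longrightarrow> meas A t z"
  unfolding Qset_def by blast

lemma Qset_step_D:
  assumes t: "t < T" and z: "z \<in> Qset \<Omega> A \<pi> T t"
  shows "\<exists>y'. meas A t y' \<and> y' \<in> Qset \<Omega> A \<pi> T (Suc t) \<and> (\<lambda>\<omega>. z \<omega> - y' \<omega>) \<in> Kset \<Omega> A \<pi> t"
proof -
  obtain y where y1: "\<forall>s\<in>{Suc t..Suc T}. meas A (s - 1) (y s)" and y2: "\<forall>\<omega>\<in>\<Omega>. y (Suc T) \<omega> = 0"
    and y3: "(\<lambda>\<omega>. z \<omega> - y (Suc t) \<omega>) \<in> Kset \<Omega> A \<pi> t"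
    and y4: "\<forall>s\<in>{Suc t..T}. (\<lambda>\<omega>. y s \<omega> - y (Suc s) \<omega>) \<in> Kset \<Omega> A \<pi> s"
    using z unfolding Qset_def mem_Collect_eq by blast
  have "Suc t \<in> {Suc t..Suc T}" using t by simp
  then have "meas A (Suc t - 1) (y (Suc t))" using y1 by blast
  then have m: "meas A t (y (Suc t))" by simp
  have st: "Suc t \<in> {Suc t..T}" using t by simp
  have "y (Suc t) \<in> Qset \<Omega> A \<pi> T (Suc t)"
    unfolding Qset_def mem_Collect_eq
  proof (intro conjI exI[of _ y])
    show "meas A (Suc t) (y (Suc t))" using meas_mono[OF m, of "Suc t"] t by simp
    show "\<forall>s\<in>{Suc (Suc t)..Suc T}. meas A (s - 1) (y s)" using y1 by auto
    show "\<forall>\<omega>\<in>\<Omega>. y (Suc T) \<omega> = 0" by (rule y2)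
    show "(\<lambda>\<omega>. y (Suc t) \<omega> - y (Suc (Suc t)) \<omega>) \<in> Kset \<Omega> A \<pi> (Suc t)" using y4 st by blast
    show "\<forall>s\<in>{Suc (Suc t)..T}. (\<lambda>\<omega>. y s \<omega> - y (Suc s) \<omega>) \<in> Kset \<Omega> A \<pi> s" using y4 by auto
  qed
  then show ?thesis using m y3 by blast
qed

lemma Qset_step_I:
  assumes t: "t < T" and mz: "meas A t z" and my: "meas A t y'" and yQ: "y' \<in> Qset \<Omega> A \<pi> T (Suc t)"
    and K: "(\<lambda>\<omega>. z \<omega> - y' \<omega>) \<in> Kset \<Omega> A \<pi> t"
  shows "z \<in> Qset \<Omega> A \<pi> T t"
proof -
  obtain y where y1: "\<forall>s\<in>{Suc (Suc t)..Suc T}. meas A (s - 1) (y s)" and y2: "\<forall>\<omega>\<in>\<Omega>. y (Suc T) \<omega> = 0"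
    and y3: "(\<lambda>\<omega>. y' \<omega> - y (Suc (Suc t)) \<omega>) \<in> Kset \<Omega> A \<pi> (Suc t)"
    and y4: "\<forall>s\<in>{Suc (Suc t)..T}. (\<lambda>\<omega>. y s \<omega> - y (Suc s) \<omega>) \<in> Kset \<Omega> A \<pi> s"
    using yQ unfolding Qset_def mem_Collect_eq by blast
  define yy where "yy = y(Suc t := y')"
  show ?thesis unfolding Qset_def mem_Collect_eq
  proof (intro conjI exI[of _ yy])
    show "meas A t z" by (rule mz)
    show "\<forall>s\<in>{Suc t..Suc T}. meas A (s - 1) (yy s)"
    proof
      fix s assume s: "s \<in> {Suc t..Suc T}"
      show "meas A (s - 1) (yy s)"
      proof (cases "s = Suc t")
        case True then show ?thesis using my by (simp add: yy_def)
      next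
        case False then have "s \<in> {Suc (Suc t)..Suc T}" using s by auto
        then show ?thesis using y1 False by (simp add: yy_def)
      qed
    qed
    show "\<forall>\<omega>\<in>\<Omega>. yy (Suc T) \<omega> = 0" using y2 t by (simp add: yy_def)
    show "(\<lambda>\<omega>. z \<omega> - yy (Suc t) \<omega>) \<in> Kset \<Omega> A \<pi> t" using K by (simp add: yy_def)
    show "\<forall>s\<in>{Suc t..T}. (\<lambda>\<omega>. yy s \<omega> - yy (Suc s) \<omega>) \<in> Kset \<Omega> A \<pi> s"
    proof
      fix s assume s: "s \<in> {Suc t..T}"
      show "(\<lambda>\<omega>. yy s \<omega> - yy (Suc s) \<omega>) \<in> Kset \<Omega> A \<pi> s"
      proof (cases "s = Suc t")
        case True then show ?thesis using y3 by (simp add: yy_def)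
      next
        case False then have "s \<in> {Suc (Suc t)..T}" using s by auto
        then show ?thesis using y4 False by (simp add: yy_def)
      qed
    qed
  qed
qed

lemma QsetT_D:
  assumes z: "z \<in> Qset \<Omega> A \<pi> T T" and w: "\<omega> \<in> \<Omega>"
  shows "z \<omega> \<in> Kcone \<pi> T \<omega>"
proof -
  obtain y where y2: "\<forall>\<omega>\<in>\<Omega>. y (Suc T) \<omega> = 0"
    and y3: "(\<lambda>\<omega>. z \<omega> - y (Suc T) \<omega>) \<in> Kset \<Omega> A \<pi> T"
    using z unfolding Qset_def mem_Collect_eq by blast
  have "z \<omega> - y (Suc T) \<omega> \<in> Kcone \<pi> T \<omega>" using y3 w unfolding Kset_def by blast
  then show ?thesis using y2 w by simp
qed

lemma QsetT_I:
  assumes mz: "meas A T z" and K: "\<forall>\<omega>\<in>\<Omega>. z \<omega> \<in> Kcone \<pi> T \<omega>"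
  shows "z \<in> Qset \<Omega> A \<pi> T T"
  unfolding Qset_def mem_Collect_eq
proof (intro conjI exI[of _ "\<lambda>s \<omega>. 0"])
  show "meas A T z" by (rule mz)
  show "\<forall>s\<in>{Suc T..Suc T}. meas A (s - 1) ((\<lambda>s \<omega>. 0::real^'d) s)" by (simp add: meas_def)
  show "\<forall>\<omega>\<in>\<Omega>. (\<lambda>s \<omega>. 0::real^'d) (Suc T) \<omega> = 0" by simp
  show "(\<lambda>\<omega>. z \<omega> - (\<lambda>s \<omega>. 0::real^'d) (Suc T) \<omega>) \<in> Kset \<Omega> A \<pi> T"
    using mz K by (simp add: Kset_def)
  show "\<forall>s\<in>{Suc T..T}. (\<lambda>\<omega>. (\<lambda>s \<omega>. 0::real^'d) s \<omega> - (\<lambda>s \<omega>. 0) (Suc s) \<omega>) \<in> Kset \<Omega> A \<pi> s" by simp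
qed

lemma Qnode_T:
  assumes mu: "\<mu> \<in> A T" and w: "\<omega> \<in> \<mu>"
  shows "Qnode \<Omega> A \<pi> T T \<mu> = Kcone \<pi> T \<omega>"
proof
  show "Qnode \<Omega> A \<pi> T T \<mu> \<subseteq> Kcone \<pi> T \<omega>"
  proof
    fix q assume "q \<in> Qnode \<Omega> A \<pi> T T \<mu>"
    then obtain z where z: "z \<in> Qset \<Omega> A \<pi> T T" and q: "q = nodeval z \<mu>" unfolding Qnode_def by blast
    have "q = z \<omega>" using nodeval_eq[OF order_refl mu Qset_meas[OF z] w] q by simp
    moreover have "\<omega> \<in> \<Omega>" using atom_sub[OF order_refl mu] w by blast
    ultimately show "q \<in> Kcone \<pi> T \<omega>" using QsetT_D[OF z] by simp
  qed
next
  show "Kcone \<pi> T \<omega> \<subseteq> Qnode \<Omega> A \<pi> T T \<mu>"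
  proof
    fix k assume k: "k \<in> Kcone \<pi> T \<omega>"
    define z where "z = (\<lambda>\<omega>'. if \<omega>' \<in> \<mu> then k else 0)"
    have mz: "meas A T z" unfolding z_def by (rule meas_ind[OF order_refl mu])
    have "\<forall>\<omega>'\<in>\<Omega>. z \<omega>' \<in> Kcone \<pi> T \<omega>'"
    proof
      fix \<omega>' assume "\<omega>' \<in> \<Omega>"
      show "z \<omega>' \<in> Kcone \<pi> T \<omega>'"
      proof (cases "\<omega>' \<in> \<mu>")
        case True
        then have "Kcone \<pi> T \<omega>' = Kcone \<pi> T \<omega>" using Kcone_node[OF order_refl mu] w by blast
        then show ?thesis using k True by (simp add: z_def)
      next
        case False then show ?thesis by (simp add: z_def Kcone_0)
      qed
    qed
    then have "z \<in> Qset \<Omega> A \<pi> T T" using QsetT_I mz by blast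
    moreover have "nodeval z \<mu> = k" using nodeval_eq[OF order_refl mu mz w] by (simp add: z_def w)
    ultimately show "k \<in> Qnode \<Omega> A \<pi> T T \<mu>" unfolding Qnode_def by blast
  qed
qed

lemma Qnode_step:
  assumes t: "t < T" and mu: "\<mu> \<in> A t" and w: "\<omega> \<in> \<mu>"
  shows "Qnode \<Omega> A \<pi> T t \<mu> = msum (Kcone \<pi> t \<omega>) (\<Inter>\<nu>\<in>succ A t \<mu>. Qnode \<Omega> A \<pi> T (Suc t) \<nu>)"
proof
  have tT: "t \<le> T" using t by simp
  have St: "Suc t \<le> T" using t by simp
  have B: "succ A t \<mu> \<subseteq> A (Suc t)" using succ_sub by blast
  show "Qnode \<Omega> A \<pi> T t \<mu> \<subseteq> msum (Kcone \<pi> t \<omega>) (\<Inter>\<nu>\<in>succ A t \<mu>. Qnode \<Omega> A \<pi> T (Suc t) \<nu>)"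
  proof
    fix q assume "q \<in> Qnode \<Omega> A \<pi> T t \<mu>"
    then obtain z where z: "z \<in> Qset \<Omega> A \<pi> T t" and q: "q = nodeval z \<mu>" unfolding Qnode_def by blast
    obtain y' where my: "meas A t y'" and yQ: "y' \<in> Qset \<Omega> A \<pi> T (Suc t)"
      and K: "(\<lambda>\<omega>. z \<omega> - y' \<omega>) \<in> Kset \<Omega> A \<pi> t"
      using Qset_step_D[OF t z] by blast
    have Om: "\<omega> \<in> \<Omega>" using atom_sub[OF tT mu] w by blast
    have q1: "q = z \<omega>" using nodeval_eq[OF tT mu Qset_meas[OF z] w] q by simp
    have q2: "z \<omega> - y' \<omega> \<in> Kcone \<pi> t \<omega>" using K Om unfolding Kset_def by blast
    have q3: "y' \<omega> \<in> Qnode \<Omega> A \<pi> T (Suc t) \<nu>" if "\<nu> \<in> succ A t \<mu>" for \<nu>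
    proof -
      have nu: "\<nu> \<in> A (Suc t)" "\<nu> \<subseteq> \<mu>" using succ_sub[OF that] by auto
      obtain \<omega>' where w': "\<omega>' \<in> \<nu>" using atom_ne[OF St nu(1)] by blast
      have "y' \<omega>' = y' \<omega>" using my mu w' nu w unfolding meas_def by blast
      moreover have "nodeval y' \<nu> = y' \<omega>'"
        using nodeval_eq[OF St nu(1) meas_mono[OF my _ St] w'] by simp
      moreover have "nodeval y' \<nu> \<in> Qnode \<Omega> A \<pi> T (Suc t) \<nu>" using yQ unfolding Qnode_def by blast
      ultimately show ?thesis by simp
    qed
    have "q = (z \<omega> - y' \<omega>) + y' \<omega>" using q1 by simp
    then show "q \<in> msum (Kcone \<pi> t \<omega>) (\<Inter>\<nu>\<in>succ A t \<mu>. Qnode \<Omega> A \<pi> T (Suc t) \<nu>)"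
      unfolding msum_def using q2 q3 by blast
  qed
next
  have tT: "t \<le> T" using t by simp
  have St: "Suc t \<le> T" using t by simp
  have B: "succ A t \<mu> \<subseteq> A (Suc t)" using succ_sub by blast
  show "msum (Kcone \<pi> t \<omega>) (\<Inter>\<nu>\<in>succ A t \<mu>. Qnode \<Omega> A \<pi> T (Suc t) \<nu>) \<subseteq> Qnode \<Omega> A \<pi> T t \<mu>"
  proof
    fix q assume "q \<in> msum (Kcone \<pi> t \<omega>) (\<Inter>\<nu>\<in>succ A t \<mu>. Qnode \<Omega> A \<pi> T (Suc t) \<nu>)"
    then obtain k w' where q: "q = k + w'" and k: "k \<in> Kcone \<pi> t \<omega>"
      and wq: "\<forall>\<nu>\<in>succ A t \<mu>. w' \<in> Qnode \<Omega> A \<pi> T (Suc t) \<nu>"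
      unfolding msum_def by blast
    have "\<forall>\<nu>\<in>succ A t \<mu>. \<exists>zn. zn \<in> Qset \<Omega> A \<pi> T (Suc t) \<and> nodeval zn \<nu> = w'"
    proof
      fix \<nu> assume "\<nu> \<in> succ A t \<mu>"
      then have "w' \<in> (\<lambda>z. nodeval z \<nu>) ` Qset \<Omega> A \<pi> T (Suc t)" using wq unfolding Qnode_def by blast
      then obtain zn where "zn \<in> Qset \<Omega> A \<pi> T (Suc t)" "w' = nodeval zn \<nu>" by (rule imageE)
      then show "\<exists>zn. zn \<in> Qset \<Omega> A \<pi> T (Suc t) \<and> nodeval zn \<nu> = w'" by blast
    qed
    then have "\<exists>Z. \<forall>\<nu>\<in>succ A t \<mu>. Z \<nu> \<in> Qset \<Omega> A \<pi> T (Suc t) \<and> nodeval (Z \<nu>) \<nu> = w'"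
      by (rule bchoice)
    then obtain Z where Z: "\<forall>\<nu>\<in>succ A t \<mu>. Z \<nu> \<in> Qset \<Omega> A \<pi> T (Suc t) \<and> nodeval (Z \<nu>) \<nu> = w'"
      by (rule exE)
    define y' where "y' = glue (succ A t \<mu>) Z"
    have yQ: "y' \<in> Qset \<Omega> A \<pi> T (Suc t)" unfolding y'_def
      by (rule glue_Q[OF St B]) (use Z in blast)
    have yv: "y' \<omega>' = (if \<omega>' \<in> \<mu> then w' else 0)" for \<omega>'
    proof (cases "\<omega>' \<in> \<mu>")
      case True
      then obtain \<nu> where nu: "\<nu> \<in> succ A t \<mu>" "\<omega>' \<in> \<nu>" using succ_cover[OF t mu] by blast
      have nuA: "\<nu> \<in> A (Suc t)" using B nu(1) by blast
      have Zn: "Z \<nu> \<in> Qset \<Omega> A \<pi> T (Suc t)" "nodeval (Z \<nu>) \<nu> = w'" using Z nu(1) by blast+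
      have "y' \<omega>' = Z \<nu> \<omega>'" unfolding y'_def by (rule glue_in[OF St B nu])
      also have "\<dots> = nodeval (Z \<nu>) \<nu>" using nodeval_eq[OF St nuA Qset_meas[OF Zn(1)] nu(2)] by simp
      also have "\<dots> = w'" by (rule Zn(2))
      finally show ?thesis using True by simp
    next
      case False
      then have "\<not> (\<exists>\<nu>\<in>succ A t \<mu>. \<omega>' \<in> \<nu>)" using succ_sub by blast
      then show ?thesis unfolding y'_def using False by (simp add: glue_out)
    qed
    have ye: "y' = (\<lambda>\<omega>'. if \<omega>' \<in> \<mu> then w' else 0)" by (rule ext) (rule yv)
    have my: "meas A t y'" unfolding ye by (rule meas_ind[OF tT mu])
    define z where "z = (\<lambda>\<omega>'. if \<omega>' \<in> \<mu> then q else 0)"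
    have mz: "meas A t z" unfolding z_def by (rule meas_ind[OF tT mu])
    have e: "(\<lambda>\<omega>'. z \<omega>' - y' \<omega>') = (\<lambda>\<omega>'. if \<omega>' \<in> \<mu> then k else 0)"
      unfolding z_def ye q by (rule ext) simp
    have Kk: "(\<lambda>\<omega>'. if \<omega>' \<in> \<mu> then k else 0) \<in> Kset \<Omega> A \<pi> t"
      unfolding Kset_def mem_Collect_eq
    proof (intro conjI ballI)
      show "meas A t (\<lambda>\<omega>'. if \<omega>' \<in> \<mu> then k else 0)" by (rule meas_ind[OF tT mu])
      fix \<omega>' assume "\<omega>' \<in> \<Omega>"
      show "(if \<omega>' \<in> \<mu> then k else 0) \<in> Kcone \<pi> t \<omega>'"
      proof (cases "\<omega>' \<in> \<mu>")
        case True then have "Kcone \<pi> t \<omega>' = Kcone \<pi> t \<omega>" using Kcone_node[OF tT mu] w by blast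
        then show ?thesis using k True by simp
      next
        case False then show ?thesis by (simp add: Kcone_0)
      qed
    qed
    have K: "(\<lambda>\<omega>'. z \<omega>' - y' \<omega>') \<in> Kset \<Omega> A \<pi> t" unfolding e by (rule Kk)
    have "z \<in> Qset \<Omega> A \<pi> T t" by (rule Qset_step_I[OF t mz my yQ K])
    moreover have "nodeval z \<mu> = q" using nodeval_eq[OF tT mu mz w] w by (simp add: z_def)
    ultimately show "q \<in> Qnode \<Omega> A \<pi> T t \<mu>" unfolding Qnode_def by blast
  qed
qed

lemma Qnode_fg_aux:
  "T - t = n \<Longrightarrow> t \<le> T \<Longrightarrow> \<mu> \<in> A t \<Longrightarrow> \<exists>G. finite G \<and> Qnode \<Omega> A \<pi> T t \<mu> = convex_cone hull G"
proof (induction n arbitrary: t \<mu>)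
  case 0
  then have tT: "t = T" by simp
  obtain \<omega> where w: "\<omega> \<in> \<mu>" using atom_ne 0 by blast
  have muT: "\<mu> \<in> A T" using 0 tT by simp
  have e: "Qnode \<Omega> A \<pi> T t \<mu> = Kcone \<pi> T \<omega>" unfolding tT by (rule Qnode_T[OF muT w])
  obtain G where G: "finite G \<and> Kcone \<pi> T \<omega> = convex_cone hull G" using Kcone_fg[of \<pi> T \<omega>] ..
  show ?case unfolding e by (rule exI[of _ G]) (rule G)
next
  case (Suc n)
  then have t: "t < T" and n: "T - Suc t = n" by auto
  have "\<mu> \<noteq> {}" using atom_ne Suc.prems(2,3) by blast
  then obtain \<omega> where w: "\<omega> \<in> \<mu>" by blast
  define I where "I = (\<Inter>\<nu>\<in>succ A t \<mu>. Qnode \<Omega> A \<pi> T (Suc t) \<nu>)"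
  have IH: "\<exists>G. finite G \<and> Qnode \<Omega> A \<pi> T (Suc t) \<nu> = convex_cone hull G" if "\<nu> \<in> succ A t \<mu>" for \<nu>
  proof (rule Suc.IH[OF n])
    show "Suc t \<le> T" using t by simp
    show "\<nu> \<in> A (Suc t)" using succ_sub[OF that] by blast
  qed
  have "polyhedron I" unfolding I_def
  proof (rule polyhedron_Inter)
    show "finite ((\<lambda>\<nu>. Qnode \<Omega> A \<pi> T (Suc t) \<nu>) ` succ A t \<mu>)" using succ_finite[OF t] by simp
    fix S assume "S \<in> (\<lambda>\<nu>. Qnode \<Omega> A \<pi> T (Suc t) \<nu>) ` succ A t \<mu>"
    then obtain \<nu> where "\<nu> \<in> succ A t \<mu>" "S = Qnode \<Omega> A \<pi> T (Suc t) \<nu>" by blast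
    then obtain G where "finite G" "S = convex_cone hull G" using IH by blast
    then show "polyhedron S" using polyhedron_convex_cone_hull by blast
  qed
  moreover have "convex_cone I" unfolding I_def
  proof (rule convex_cone_Inter)
    fix S assume "S \<in> (\<lambda>\<nu>. Qnode \<Omega> A \<pi> T (Suc t) \<nu>) ` succ A t \<mu>"
    then obtain \<nu> where "\<nu> \<in> succ A t \<mu>" "S = Qnode \<Omega> A \<pi> T (Suc t) \<nu>" by blast
    then obtain G where "finite G" "S = convex_cone hull G" using IH by blast
    then show "convex_cone S" using convex_cone_convex_cone_hull by blast
  qed
  ultimately have "\<exists>G. finite G \<and> I = convex_cone hull G" by (rule polyhedral_cone_fg)
  then obtain G2 where G2': "finite G2 \<and> I = convex_cone hull G2" ..
  then have G2: "finite G2" "I = convex_cone hull G2" by auto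
  obtain G1 where G1': "finite G1 \<and> Kcone \<pi> t \<omega> = convex_cone hull G1" using Kcone_fg[of \<pi> t \<omega>] ..
  then have G1: "finite G1" "Kcone \<pi> t \<omega> = convex_cone hull G1" by auto
  have "Qnode \<Omega> A \<pi> T t \<mu> = msum (Kcone \<pi> t \<omega>) I" unfolding I_def by (rule Qnode_step[OF t Suc.prems(3) w])
  also have "\<dots> = convex_cone hull (G1 \<union> G2)" unfolding G1(2) G2(2) msum_UN convex_cone_hull_Un by (rule refl)
  finally show ?case using G1(1) G2(1) by blast
qed

lemma Qnode_fg: "t \<le> T \<Longrightarrow> \<mu> \<in> A t \<Longrightarrow> \<exists>G. finite G \<and> Qnode \<Omega> A \<pi> T t \<mu> = convex_cone hull G"
  by (rule Qnode_fg_aux[OF refl])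

lemma Qnode_cc: "t \<le> T \<Longrightarrow> \<mu> \<in> A t \<Longrightarrow> convex_cone (Qnode \<Omega> A \<pi> T t \<mu>)"
proof -
  assume "t \<le> T" "\<mu> \<in> A t"
  then have "\<exists>G. finite G \<and> Qnode \<Omega> A \<pi> T t \<mu> = convex_cone hull G" by (rule Qnode_fg)
  then obtain G where G: "finite G \<and> Qnode \<Omega> A \<pi> T t \<mu> = convex_cone hull G" ..
  then have "Qnode \<Omega> A \<pi> T t \<mu> = convex_cone hull G" by simp
  then show ?thesis using convex_cone_convex_cone_hull by simp
qed

lemma Qnode_closed: "t \<le> T \<Longrightarrow> \<mu> \<in> A t \<Longrightarrow> closed (Qnode \<Omega> A \<pi> T t \<mu>)"
proof -
  assume "t \<le> T" "\<mu> \<in> A t"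
  then have "\<exists>G. finite G \<and> Qnode \<Omega> A \<pi> T t \<mu> = convex_cone hull G" by (rule Qnode_fg)
  then obtain G where G: "finite G \<and> Qnode \<Omega> A \<pi> T t \<mu> = convex_cone hull G" ..
  then have "Qnode \<Omega> A \<pi> T t \<mu> = convex_cone hull G" by simp
  then show ?thesis using closed_convex_cone_hull[of G] G by simp
qed

lemma Qnode_pos_aux:
  "T - t = n \<Longrightarrow> t \<le> T \<Longrightarrow> \<mu> \<in> A t \<Longrightarrow> \<forall>j. 0 \<le> x $ j \<Longrightarrow> x \<in> Qnode \<Omega> A \<pi> T t \<mu>"
proof (induction n arbitrary: t \<mu> x)
  case 0
  then have tT: "t = T" by simp
  obtain \<omega> where w: "\<omega> \<in> \<mu>" using atom_ne 0 by blast
  have muT: "\<mu> \<in> A T" using 0 tT by simp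
  have e: "Qnode \<Omega> A \<pi> T t \<mu> = Kcone \<pi> T \<omega>" unfolding tT by (rule Qnode_T[OF muT w])
  show ?case unfolding e by (rule Kcone_pos[OF 0(4)])
next
  case (Suc n)
  then have t: "t < T" and n: "T - Suc t = n" by auto
  have "\<mu> \<noteq> {}" using atom_ne Suc.prems(2,3) by blast
  then obtain \<omega> where w: "\<omega> \<in> \<mu>" by blast
  have "0 \<in> Qnode \<Omega> A \<pi> T (Suc t) \<nu>" if "\<nu> \<in> succ A t \<mu>" for \<nu>
  proof (rule Suc.IH[OF n])
    show "Suc t \<le> T" using t by simp
    show "\<nu> \<in> A (Suc t)" using succ_sub[OF that] by blast
  qed simp
  moreover have "x \<in> Kcone \<pi> t \<omega>" by (rule Kcone_pos[OF Suc.prems(4)])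
  ultimately have "x + 0 \<in> msum (Kcone \<pi> t \<omega>) (\<Inter>\<nu>\<in>succ A t \<mu>. Qnode \<Omega> A \<pi> T (Suc t) \<nu>)"
    unfolding msum_def by blast
  then show ?case using Qnode_step[OF t Suc.prems(3) w] by simp
qed

lemma Qnode_pos: "t \<le> T \<Longrightarrow> \<mu> \<in> A t \<Longrightarrow> \<forall>j. 0 \<le> x $ j \<Longrightarrow> x \<in> Qnode \<Omega> A \<pi> T t \<mu>"
  by (rule Qnode_pos_aux[OF refl])

lemma Qnode_sub:
  assumes t: "t < T" and mu: "\<mu> \<in> A t"
  shows "(\<Inter>\<nu>\<in>succ A t \<mu>. Qnode \<Omega> A \<pi> T (Suc t) \<nu>) \<subseteq> Qnode \<Omega> A \<pi> T t \<mu>"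
proof
  fix y assume y: "y \<in> (\<Inter>\<nu>\<in>succ A t \<mu>. Qnode \<Omega> A \<pi> T (Suc t) \<nu>)"
  have "\<mu> \<noteq> {}" by (rule atom_ne[OF less_imp_le[OF t] mu])
  then obtain \<omega> where w: "\<omega> \<in> \<mu>" by blast
  have "0 + y \<in> msum (Kcone \<pi> t \<omega>) (\<Inter>\<nu>\<in>succ A t \<mu>. Qnode \<Omega> A \<pi> T (Suc t) \<nu>)"
    unfolding msum_def using y Kcone_0[of \<pi> t \<omega>] by (intro CollectI exI[of _ 0] exI[of _ y] conjI refl)
  then show "y \<in> Qnode \<Omega> A \<pi> T t \<mu>" using Qnode_step[OF t mu w] by simp
qed


lemma Zbd_T: "Zbd \<Omega> A \<pi> T \<xi> T \<mu> = Ubd \<Omega> A \<pi> T \<xi> T \<mu>"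
  unfolding Zbd_def by simp

lemma Zbd_step:
  assumes "t < T"
  shows "Zbd \<Omega> A \<pi> T \<xi> t \<mu> = convex hull (Ubd \<Omega> A \<pi> T \<xi> t \<mu> \<union>
     {w + q |w q. w \<in> (\<Inter>\<nu>\<in>succ A t \<mu>. Zbd \<Omega> A \<pi> T \<xi> (Suc t) \<nu>) \<and> q \<in> Qnode \<Omega> A \<pi> T t \<mu>})"
proof -
  have e: "T - t = Suc (T - Suc t)" using assms by simp
  show ?thesis by (simp only: Zbd_def e Zaux.simps Let_def)
qed

lemma Ubd_msum: "Ubd \<Omega> A \<pi> T \<xi> t \<mu> = msum {- nodeval (\<xi> t) \<mu>} (Qnode \<Omega> A \<pi> T t \<mu>)"
  unfolding Ubd_def msum_def by auto

lemma Ubd_sub: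
  assumes "t \<le> T"
  shows "Ubd \<Omega> A \<pi> T \<xi> t \<mu> \<subseteq> Zbd \<Omega> A \<pi> T \<xi> t \<mu>"
proof (cases "t = T")
  case True then show ?thesis by (simp add: Zbd_T)
next
  case False
  then have t: "t < T" using assms by simp
  have "Ubd \<Omega> A \<pi> T \<xi> t \<mu> \<subseteq> Ubd \<Omega> A \<pi> T \<xi> t \<mu> \<union>
     {w + q |w q. w \<in> (\<Inter>\<nu>\<in>succ A t \<mu>. Zbd \<Omega> A \<pi> T \<xi> (Suc t) \<nu>) \<and> q \<in> Qnode \<Omega> A \<pi> T t \<mu>}"
    by (rule Un_upper1)
  also have "\<dots> \<subseteq> convex hull (Ubd \<Omega> A \<pi> T \<xi> t \<mu> \<union>
     {w + q |w q. w \<in> (\<Inter>\<nu>\<in>succ A t \<mu>. Zbd \<Omega> A \<pi> T \<xi> (Suc t) \<nu>) \<and> q \<in> Qnode \<Omega> A \<pi> T t \<mu>})"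
    by (rule hull_subset)
  finally show ?thesis unfolding Zbd_step[OF t] .
qed

lemma Zrep_aux:
  "T - t = n \<Longrightarrow> t \<le> T \<Longrightarrow> \<mu> \<in> A t \<Longrightarrow>
    \<exists>F. finite F \<and> F \<noteq> {} \<and> Zbd \<Omega> A \<pi> T \<xi> t \<mu> = msum (convex hull F) (Qnode \<Omega> A \<pi> T t \<mu>)"
proof (induction n arbitrary: t \<mu>)
  case 0
  then have tT: "t = T" by simp
  have "Zbd \<Omega> A \<pi> T \<xi> t \<mu> = msum (convex hull {- nodeval (\<xi> t) \<mu>}) (Qnode \<Omega> A \<pi> T t \<mu>)"
    unfolding tT Zbd_T Ubd_msum convex_hull_singleton by (rule refl)
  then show ?case by (intro exI[of _ "{- nodeval (\<xi> t) \<mu>}"] conjI) simp_all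
next
  case (Suc n)
  then have t: "t < T" and n: "T - Suc t = n" by auto
  have tT: "t \<le> T" using t by simp
  have St: "Suc t \<le> T" using t by simp
  have mu: "\<mu> \<in> A t" by (rule Suc.prems(3))
  define S where "S = succ A t \<mu>"
  define Q where "Q = Qnode \<Omega> A \<pi> T t \<mu>"
  define W where "W = (\<Inter>\<nu>\<in>S. Zbd \<Omega> A \<pi> T \<xi> (Suc t) \<nu>)"
  have Sfin: "finite S" unfolding S_def by (rule succ_finite[OF t])
  have SA: "\<nu> \<in> A (Suc t)" if "\<nu> \<in> S" for \<nu>
    using succ_sub[of \<nu> t \<mu>] that unfolding S_def by blast
  have "\<forall>\<nu>\<in>S. \<exists>F. finite F \<and> F \<noteq> {} \<and> Zbd \<Omega> A \<pi> T \<xi> (Suc t) \<nu> = msum (convex hull F) (Qnode \<Omega> A \<pi> T (Suc t) \<nu>)"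
  proof
    fix \<nu> assume nu: "\<nu> \<in> S"
    show "\<exists>F. finite F \<and> F \<noteq> {} \<and> Zbd \<Omega> A \<pi> T \<xi> (Suc t) \<nu> = msum (convex hull F) (Qnode \<Omega> A \<pi> T (Suc t) \<nu>)"
      by (rule Suc.IH[OF n St SA[OF nu]])
  qed
  then have "\<exists>FF. \<forall>\<nu>\<in>S. finite (FF \<nu>) \<and> FF \<nu> \<noteq> {} \<and> Zbd \<Omega> A \<pi> T \<xi> (Suc t) \<nu> = msum (convex hull (FF \<nu>)) (Qnode \<Omega> A \<pi> T (Suc t) \<nu>)"
    by (rule bchoice)
  then obtain FF where FF: "\<forall>\<nu>\<in>S. finite (FF \<nu>) \<and> FF \<nu> \<noteq> {} \<and> Zbd \<Omega> A \<pi> T \<xi> (Suc t) \<nu> = msum (convex hull (FF \<nu>)) (Qnode \<Omega> A \<pi> T (Suc t) \<nu>)"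
    by (rule exE)
  have polyW: "polyhedron W" unfolding W_def
  proof (rule polyhedron_Inter)
    show "finite ((\<lambda>\<nu>. Zbd \<Omega> A \<pi> T \<xi> (Suc t) \<nu>) ` S)" using Sfin by simp
    fix Z assume "Z \<in> (\<lambda>\<nu>. Zbd \<Omega> A \<pi> T \<xi> (Suc t) \<nu>) ` S"
    then obtain \<nu> where nu: "\<nu> \<in> S" and Z: "Z = Zbd \<Omega> A \<pi> T \<xi> (Suc t) \<nu>" by (rule imageE)
    have "\<exists>G. finite G \<and> Qnode \<Omega> A \<pi> T (Suc t) \<nu> = convex_cone hull G" by (rule Qnode_fg[OF St SA[OF nu]])
    then obtain G where G: "finite G \<and> Qnode \<Omega> A \<pi> T (Suc t) \<nu> = convex_cone hull G" ..
    note Fn = bspec[OF FF nu]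
    have "Z = msum (convex hull (FF \<nu>)) (convex_cone hull G)"
      using Z conjunct2[OF conjunct2[OF Fn]] conjunct2[OF G] by simp
    then show "polyhedron Z" using polyhedron_msum[OF conjunct1[OF Fn] conjunct1[OF G]] by simp
  qed
  define x :: "real^'d" where "x = (\<chi> j. \<Sum>\<nu>\<in>S. \<bar>nodeval (\<xi> (Suc t)) \<nu> $ j\<bar>)"
  have xW: "x \<in> W" unfolding W_def
  proof (rule INT_I)
    fix \<nu> assume nu: "\<nu> \<in> S"
    have pos: "\<forall>j. 0 \<le> (x + nodeval (\<xi> (Suc t)) \<nu>) $ j"
    proof
      fix j
      have "\<bar>nodeval (\<xi> (Suc t)) \<nu> $ j\<bar> \<le> (\<Sum>\<nu>'\<in>S. \<bar>nodeval (\<xi> (Suc t)) \<nu>' $ j\<bar>)"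
        by (rule member_le_sum[OF nu]) (simp_all add: Sfin)
      moreover have "(x + nodeval (\<xi> (Suc t)) \<nu>) $ j = (\<Sum>\<nu>'\<in>S. \<bar>nodeval (\<xi> (Suc t)) \<nu>' $ j\<bar>) + nodeval (\<xi> (Suc t)) \<nu> $ j"
        unfolding x_def by simp
      moreover have "- (nodeval (\<xi> (Suc t)) \<nu> $ j) \<le> \<bar>nodeval (\<xi> (Suc t)) \<nu> $ j\<bar>" by (rule abs_ge_minus_self)
      ultimately show "0 \<le> (x + nodeval (\<xi> (Suc t)) \<nu>) $ j" by linarith
    qed
    have Qp: "x + nodeval (\<xi> (Suc t)) \<nu> \<in> Qnode \<Omega> A \<pi> T (Suc t) \<nu>" by (rule Qnode_pos[OF St SA[OF nu] pos])
    have "x = - nodeval (\<xi> (Suc t)) \<nu> + (x + nodeval (\<xi> (Suc t)) \<nu>)" by simp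
    then have "x \<in> Ubd \<Omega> A \<pi> T \<xi> (Suc t) \<nu>" unfolding Ubd_msum msum_def using Qp by blast
    then show "x \<in> Zbd \<Omega> A \<pi> T \<xi> (Suc t) \<nu>" by (rule subsetD[OF Ubd_sub[OF St]])
  qed
  then have Wne: "W \<noteq> {}" by blast
  have "\<exists>F G. finite F \<and> F \<noteq> {} \<and> finite G \<and> W = msum (convex hull F) (convex_cone hull G)"
    by (rule polyhedron_mw[OF polyW Wne])
  then obtain FW GW where FWG: "finite FW \<and> FW \<noteq> {} \<and> finite GW \<and> W = msum (convex hull FW) (convex_cone hull GW)"
    by blast
  have FWfin: "finite FW" and FWne: "FW \<noteq> {}" and Weq: "W = msum (convex hull FW) (convex_cone hull GW)"
    using FWG by auto
  have Qcc: "convex_cone Q" unfolding Q_def by (rule Qnode_cc[OF tT mu])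
  have GWQ: "convex_cone hull GW \<subseteq> Q"
  proof
    fix g assume g: "g \<in> convex_cone hull GW"
    obtain f0 where f0: "f0 \<in> FW" using FWne by blast
    have gq: "g \<in> Qnode \<Omega> A \<pi> T (Suc t) \<nu>" if nu: "\<nu> \<in> S" for \<nu>
    proof -
      note Fn = bspec[OF FF nu]
      have "\<forall>l\<ge>0. f0 + l *\<^sub>R g \<in> msum (convex hull (FF \<nu>)) (Qnode \<Omega> A \<pi> T (Suc t) \<nu>)"
      proof (intro allI impI)
        fix l :: real assume l: "0 \<le> l"
        have a1: "f0 \<in> convex hull FW" by (rule hull_inc[OF f0])
        have a2: "l *\<^sub>R g \<in> convex_cone hull GW" by (rule convex_cone_hull_mul[OF g l])
        have "f0 + l *\<^sub>R g \<in> W" unfolding Weq msum_def using a1 a2 by blast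
        then have "f0 + l *\<^sub>R g \<in> Zbd \<Omega> A \<pi> T \<xi> (Suc t) \<nu>" unfolding W_def using nu by (rule INT_D)
        then show "f0 + l *\<^sub>R g \<in> msum (convex hull (FF \<nu>)) (Qnode \<Omega> A \<pi> T (Suc t) \<nu>)"
          unfolding conjunct2[OF conjunct2[OF Fn]] .
      qed
      then show ?thesis
        by (rule recession_limit[OF conjunct1[OF Fn] Qnode_closed[OF St SA[OF nu]] Qnode_cc[OF St SA[OF nu]]])
    qed
    then have "g \<in> (\<Inter>\<nu>\<in>succ A t \<mu>. Qnode \<Omega> A \<pi> T (Suc t) \<nu>)" unfolding S_def by blast
    then show "g \<in> Q" unfolding Q_def by (rule subsetD[OF Qnode_sub[OF t mu]])
  qed
  have Veq: "{w + q |w q. w \<in> W \<and> q \<in> Q} = msum (convex hull FW) Q"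
  proof -
    have "{w + q |w q. w \<in> W \<and> q \<in> Q} = msum W Q" unfolding msum_def by (rule refl)
    also have "\<dots> = msum (msum (convex hull FW) (convex_cone hull GW)) Q" unfolding Weq by (rule refl)
    also have "\<dots> = msum (convex hull FW) Q" by (rule msum_absorb[OF Qcc GWQ convex_cone_hull_contains_0])
    finally show ?thesis .
  qed
  have "Zbd \<Omega> A \<pi> T \<xi> t \<mu> = convex hull (Ubd \<Omega> A \<pi> T \<xi> t \<mu> \<union> {w + q |w q. w \<in> W \<and> q \<in> Q})"
    unfolding W_def Q_def S_def by (rule Zbd_step[OF t])
  also have "\<dots> = convex hull (msum {- nodeval (\<xi> t) \<mu>} Q \<union> msum (convex hull FW) Q)"
    unfolding Veq unfolding Ubd_msum Q_def by (rule refl)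
  also have "\<dots> = msum (convex hull (insert (- nodeval (\<xi> t) \<mu>) FW)) Q"
    by (rule hull_union_msum[OF Qcc FWne])
  finally have "Zbd \<Omega> A \<pi> T \<xi> t \<mu> = msum (convex hull (insert (- nodeval (\<xi> t) \<mu>) FW)) (Qnode \<Omega> A \<pi> T t \<mu>)"
    unfolding Q_def .
  then show ?case using FWfin by (intro exI[of _ "insert (- nodeval (\<xi> t) \<mu>) FW"] conjI) simp_all
qed

end

lemma recession_msum:
  fixes C :: "'a::euclidean_space set"
  assumes F: "finite F" "F \<noteq> {}" and C: "closed C" "convex_cone C"
  shows "recession_cone (msum (convex hull F) C) = C"
proof
  show "recession_cone (msum (convex hull F) C) \<subseteq> C"
  proof
    fix y assume y: "y \<in> recession_cone (msum (convex hull F) C)"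
    obtain f where f: "f \<in> F" using F(2) by blast
    have "f + 0 \<in> msum (convex hull F) C"
      unfolding msum_def using hull_inc[OF f] convex_cone_contains_0[OF C(2)] by blast
    then have fm: "f \<in> msum (convex hull F) C" by simp
    have "\<forall>l\<ge>0. f + l *\<^sub>R y \<in> msum (convex hull F) C"
      using y fm unfolding recession_cone_def by blast
    then show "y \<in> C" by (rule recession_limit[OF F(1) C])
  qed
next
  show "C \<subseteq> recession_cone (msum (convex hull F) C)"
  proof
    fix y assume y: "y \<in> C"
    show "y \<in> recession_cone (msum (convex hull F) C)"
      unfolding recession_cone_def mem_Collect_eq
    proof (intro allI impI ballI)
      fix c :: real and a assume c: "0 \<le> c" and a: "a \<in> msum (convex hull F) C"
      then obtain f q where "a = f + q" "f \<in> convex hull F" "q \<in> C" unfolding msum_def by blast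
      moreover have "q + c *\<^sub>R y \<in> C" using C(2) \<open>q \<in> C\<close> y c by (simp add: convex_cone_add convex_cone_scaleR)
      moreover have "a + c *\<^sub>R y = f + (q + c *\<^sub>R y)" using \<open>a = f + q\<close> by simp
      ultimately show "a + c *\<^sub>R y \<in> msum (convex hull F) C" unfolding msum_def by blast
    qed
  qed
qed

theorem proposition5p2:
  fixes \<Omega> :: "'w set" and A :: "nat \<Rightarrow> 'w set set" and T :: nat
    and P :: "'w \<Rightarrow> real"
    and \<pi> :: "nat \<Rightarrow> 'w \<Rightarrow> 'd::finite \<Rightarrow> 'd \<Rightarrow> real"
    and \<xi> :: "nat \<Rightarrow> 'w \<Rightarrow> real^'d"
  assumes filt: "finite_filtration \<Omega> A T"
    and prob: "\<forall>\<omega>\<in>\<Omega>. P \<omega> > 0" "(\<Sum>\<omega>\<in>\<Omega>. P \<omega>) = 1"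
    and rates_meas: "\<forall>t\<le>T. meas A t (\<pi> t)"
    and rates_pos: "\<forall>t\<le>T. \<forall>\<omega>\<in>\<Omega>. \<forall>j k. \<pi> t \<omega> j k > 0"
    and rates_diag: "\<forall>t\<le>T. \<forall>\<omega>\<in>\<Omega>. \<forall>j. \<pi> t \<omega> j j = 1"
    and NA: "no_arbitrage \<Omega> A \<pi> T"
    and adapted: "\<forall>t\<le>T. meas A t (\<xi> t)"
    and t: "t \<le> T" and mu: "\<mu> \<in> A t"
  shows "Zbd \<Omega> A \<pi> T \<xi> t \<mu> \<noteq> {} \<and> convex (Zbd \<Omega> A \<pi> T \<xi> t \<mu>)
    \<and> polyhedron (Zbd \<Omega> A \<pi> T \<xi> t \<mu>)
    \<and> recession_cone (Zbd \<Omega> A \<pi> T \<xi> t \<mu>) = Qnode \<Omega> A \<pi> T t \<mu>"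
proof -
  interpret M: mkt \<Omega> A T \<pi> by (rule mkt.intro) (rule filt, rule rates_meas)
  have "\<exists>F. finite F \<and> F \<noteq> {} \<and> Zbd \<Omega> A \<pi> T \<xi> t \<mu> = msum (convex hull F) (Qnode \<Omega> A \<pi> T t \<mu>)"
    by (rule M.Zrep_aux[OF refl t mu])
  then obtain F where F: "finite F \<and> F \<noteq> {} \<and> Zbd \<Omega> A \<pi> T \<xi> t \<mu> = msum (convex hull F) (Qnode \<Omega> A \<pi> T t \<mu>)" ..
  have "\<exists>G. finite G \<and> Qnode \<Omega> A \<pi> T t \<mu> = convex_cone hull G" by (rule M.Qnode_fg[OF t mu])
  then obtain G where G: "finite G \<and> Qnode \<Omega> A \<pi> T t \<mu> = convex_cone hull G" ..
  have Ffin: "finite F" and Fne: "F \<noteq> {}" and Zeq: "Zbd \<Omega> A \<pi> T \<xi> t \<mu> = msum (convex hull F) (Qnode \<Omega> A \<pi> T t \<mu>)"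
    using F by auto
  have Gfin: "finite G" and Qeq: "Qnode \<Omega> A \<pi> T t \<mu> = convex_cone hull G" using G by auto
  have Qcc: "convex_cone (Qnode \<Omega> A \<pi> T t \<mu>)" by (rule M.Qnode_cc[OF t mu])
  have Qcl: "closed (Qnode \<Omega> A \<pi> T t \<mu>)" by (rule M.Qnode_closed[OF t mu])
  have ne: "Zbd \<Omega> A \<pi> T \<xi> t \<mu> \<noteq> {}"
  proof -
    obtain f where f: "f \<in> F" using Fne by blast
    have "f + 0 \<in> msum (convex hull F) (Qnode \<Omega> A \<pi> T t \<mu>)"
      unfolding msum_def using hull_inc[OF f] convex_cone_contains_0[OF Qcc] by blast
    then show ?thesis unfolding Zeq by blast
  qed
  have cv: "convex (Zbd \<Omega> A \<pi> T \<xi> t \<mu>)"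
    unfolding Zeq msum_UN
    by (rule convex_sums[OF convex_convex_hull]) (use Qcc in \<open>simp add: convex_cone_def\<close>)
  have ph: "polyhedron (Zbd \<Omega> A \<pi> T \<xi> t \<mu>)"
    unfolding Zeq Qeq by (rule polyhedron_msum[OF Ffin Gfin])
  have rc: "recession_cone (Zbd \<Omega> A \<pi> T \<xi> t \<mu>) = Qnode \<Omega> A \<pi> T t \<mu>"
    unfolding Zeq by (rule recession_msum[OF Ffin Fne Qcl Qcc])
  show ?thesis using ne cv ph rc by blast
qed

end
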